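(* Let $K\ge2$, $p\in(0,1)$, $M>0$. For every $f\in\mathcal M_p$, the ranking output by \textsc{NP} with parameter $M$ satisfies $$\mathbb P(\sigma_{\mathrm{out}}\neq\sigma_f)\le(K-1)\,p^M.$$
   Context: Items are $[K]=\{1,\dots,K\}$, $\mathcal S=\{S\subseteq[K]:|S|\ge2\}$. A preference $f$ is a family of numbers $f(i\mid S)$. For $p\in(0,1)$, $\mathcal M_p$ consists of all $f$ with (i) $f(i\mid S)>0$ iff $i\in S$; (ii) $\sum_{i\in S}f(i\mid S)=1$; (iii) a bijection $\sigma_f:[K]\to[K]$ (the ranking; $\sigma_f(i)=k$ means $i$ is in position $k$) with $f(i\mid S)\le pf(i'\mid S)$ whenever $i,i'\in S$, $\sigma_f(i')<\sigma_f(i)$. Interaction: at each time $t$ a display set $S_t$ is chosen based on the past and a choice $X_t\in S_t$ is observed with conditional law $f(\cdot\mid S_t)$. Algorithm \textsc{NP} (Nested Partition) with parameter $M>0$: global scores $W_0(i)=0$ and a global timer $t=0$. Recursive subroutine $\textsc{Partition}(S)$ returning an ordered list of the elements of $S$: if $|S|=1$ return $S$. Otherwise repeat: $t\leftarrow t+1$; display $S$, observe $X_t$; $W_t(X_t)=W_{t-1}(X_t)+1$, other scores unchanged; order $S$ as $\pi_t(1),\dots,\pi_t(|S|)$ with nonincreasing $W_t$; if there is $k$ with $W_t(\pi_t(k))-W_t(\pi_t(k+1))\ge M$, set $S_{\mathrm{high}}=\{\pi_t(1),\dots,\pi_t(k)\}$, $S_{\mathrm{low}}=S\setminus S_{\mathrm{high}}$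 and return the concatenation of $\textsc{Partition}(S_{\mathrm{high}})$ followed by $\textsc{Partition}(S_{\mathrm{low}})$ (the former executed first). The master routine computes $\pi_{\mathrm{out}}=\textsc{Partition}([K])$ (a bijection $[K]\to[K]$ listing items from best to worst) and outputs $\sigma_{\mathrm{out}}=\pi_{\mathrm{out}}^{-1}$. *)

theory Defs
  imports "HOL-Probability.Probability"
begin

definition setsK :: "nat \<Rightarrow> nat set set" where
  "setsK K = {S. S \<subseteq> {1..K} \<and> card S \<ge> 2}"

(* f i S stands for f(i | S).  Membership in M_p together with a ranking sigma. *)
definition is_pref :: "nat \<Rightarrow> (nat \<Rightarrow> nat set \<Rightarrow> real) \<Rightarrow> bool" where
  "is_pref K f \<longleftrightarrow>
     (\<forall>S\<in>setsK K. (\<forall>i\<in>{1..K}. f i S > 0 \<longleftrightarrow> i \<in> S) \<and> (\<Sum>i\<in>S. f i S) = 1)"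

definition is_ranking :: "nat \<Rightarrow> real \<Rightarrow> (nat \<Rightarrow> nat set \<Rightarrow> real) \<Rightarrow> (nat \<Rightarrow> nat) \<Rightarrow> bool" where
  "is_ranking K p f \<sigma> \<longleftrightarrow> bij_betw \<sigma> {1..K} {1..K} \<and>
     (\<forall>S\<in>setsK K. \<forall>i\<in>S. \<forall>i'\<in>S. \<sigma> i' < \<sigma> i \<longrightarrow> f i S \<le> p * f i' S)"

definition choice_pmf :: "nat \<Rightarrow> (nat \<Rightarrow> nat set \<Rightarrow> real) \<Rightarrow> nat set \<Rightarrow> nat pmf" where
  "choice_pmf K f S = (if S \<in> setsK K then embed_pmf (\<lambda>i. if i \<in> S then f i S else 0)
                       else return_pmf 0)"

(* At each time step an independent "choice function" is drawn: for every candidate display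
   set S an independent choice with law f(.|S).  The observed choice at time t is the value at
   the actually displayed set S_t; since the draw at time t is independent of the past, the
   conditional law of X_t given the past is f(.|S_t). *)
definition choice_fun_pmf :: "nat \<Rightarrow> (nat \<Rightarrow> nat set \<Rightarrow> real) \<Rightarrow> (nat set \<Rightarrow> nat) pmf" where
  "choice_fun_pmf K f = Pi_pmf (Pow {1..K}) 0 (choice_pmf K f)"

definition Omega :: "nat \<Rightarrow> (nat \<Rightarrow> nat set \<Rightarrow> real) \<Rightarrow> (nat \<Rightarrow> (nat set \<Rightarrow> nat)) measure" where
  "Omega K f = PiM UNIV (\<lambda>_::nat. measure_pmf (choice_fun_pmf K f))"

(* State of NP: global scores W, stack of pending calls Partition(S) (head executed next),
   output list produced so far (items from best to worst). *)
type_synonym np_state = "(nat \<Rightarrow> nat) \<times> nat set list \<times> nat list"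

(* Calls Partition(S) with |S| <= 1 return immediately without using time. *)
fun np_norm :: "np_state \<Rightarrow> np_state" where
  "np_norm (W, [], out) = (W, [], out)"
| "np_norm (W, S # st, out) =
     (if card S \<le> 1 then np_norm (W, st, out @ sorted_list_of_set S) else (W, S # st, out))"

fun np_step :: "real \<Rightarrow> (nat set \<Rightarrow> nat) \<Rightarrow> np_state \<Rightarrow> np_state" where
  "np_step M c (W, [], out) = (W, [], out)"
| "np_step M c (W, S # st, out) =
     (let x = c S;
          W' = W(x := Suc (W x));
          L = sort_key (\<lambda>i. - int (W' i)) (sorted_list_of_set S);
          cuts = {k. 0 < k \<and> k < length L \<and> real (W' (L ! (k - 1))) - real (W' (L ! k)) \<ge> M}
      in if cuts = {} then (W', S # st, out)
         else (let k = Min cuts in np_norm (W', set (take k L) # set (drop k L) # st, out)))"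

fun np_run :: "nat \<Rightarrow> real \<Rightarrow> (nat \<Rightarrow> (nat set \<Rightarrow> nat)) \<Rightarrow> nat \<Rightarrow> np_state" where
  "np_run K M \<omega> 0 = np_norm (\<lambda>_. 0, [{1..K}], [])"
| "np_run K M \<omega> (Suc t) = np_step M (\<omega> t) (np_run K M \<omega> t)"

(* NP terminates and outputs pi_out with sigma_out = pi_out^{-1} = sigma. *)
definition np_correct :: "nat \<Rightarrow> real \<Rightarrow> (nat \<Rightarrow> nat) \<Rightarrow> (nat \<Rightarrow> (nat set \<Rightarrow> nat)) \<Rightarrow> bool" where
  "np_correct K M \<sigma> \<omega> \<longleftrightarrow>
     (\<exists>t. fst (snd (np_run K M \<omega> t)) = [] \<and>
          (let out = snd (snd (np_run K M \<omega> t)) in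
             length out = K \<and> (\<forall>k<K. \<sigma> (out ! k) = Suc k)))"

end

theory Submission
  imports Defs
begin

definition bl :: "np_state \<Rightarrow> nat set list" where
  "bl s = map (\<lambda>i. {i}) (snd (snd s)) @ fst (snd s)"

lemma np_norm_props:
  assumes "\<forall>B\<in>set st. B \<noteq> {} \<and> finite B"
  shows "bl (np_norm (W, st, out)) = bl (W, st, out) \<and> fst (np_norm (W, st, out)) = W
     \<and> (fst (snd (np_norm (W, st, out))) \<noteq> [] \<longrightarrow> card (hd (fst (snd (np_norm (W, st, out))))) \<ge> 2)
     \<and> set (fst (snd (np_norm (W, st, out)))) \<subseteq> set st"
  using assms
proof (induction st arbitrary: out)
  case Nil
  then show ?case by (simp add: bl_def)
next
  case (Cons S st)
  show ?case
  proof (cases "card S \<le> 1")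
    case True
    from Cons.prems have "S \<noteq> {}" "finite S" by auto
    with True obtain i where "S = {i}"
      by (metis card_1_singletonE card_0_eq le_Suc_eq One_nat_def le_zero_eq)
    with Cons show ?thesis by (auto simp: bl_def)
  next
    case False
    then show ?thesis by (simp add: bl_def)
  qed
qed

lemma sortL_facts:
  fixes W' :: "nat \<Rightarrow> nat"
  assumes "finite S" and L: "L = sort_key (\<lambda>i. - int (W' i)) (sorted_list_of_set S)"
  shows "set L = S" "distinct L" "length L = card S"
    "\<And>u v. u \<le> v \<Longrightarrow> v < length L \<Longrightarrow> W' (L ! v) \<le> W' (L ! u)"
proof -
  show "set L = S" using assms by simp
  show "distinct L" using assms by simp
  show "length L = card S" using assms by simp
  fix u v assume uv: "u \<le> v" "v < length L"
  have "sorted (map (\<lambda>i. - int (W' i)) L)" unfolding L by (rule sorted_sort_key)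
  then have "(map (\<lambda>i. - int (W' i)) L) ! u \<le> (map (\<lambda>i. - int (W' i)) L) ! v"
    using uv by (intro sorted_nth_mono) auto
  then show "W' (L ! v) \<le> W' (L ! u)" using uv by simp
qed

lemma step_cases:
  fixes M :: real
  assumes fin: "finite S" and Mpos: "M > 0" and cardS: "card S \<ge> 2"
    and stB: "\<forall>B\<in>set st. B \<noteq> {} \<and> finite B"
    and W'def: "W' = W(c S := Suc (W (c S)))"
  shows "(np_step M c (W, S # st, out) = (W', S # st, out) \<and>
           \<not> (\<exists>y\<in>S. \<forall>z\<in>S - {y}. real (W' z) + M \<le> real (W' y)))
       \<or> (\<exists>A B. bl (np_step M c (W, S # st, out)) = map (\<lambda>i. {i}) out @ A # B # st
           \<and> fst (np_step M c (W, S # st, out)) = W'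
           \<and> A \<union> B = S \<and> A \<inter> B = {} \<and> A \<noteq> {} \<and> B \<noteq> {}
           \<and> (\<forall>i\<in>A. \<forall>j\<in>B. real (W' j) + M \<le> real (W' i))
           \<and> (fst (snd (np_step M c (W, S # st, out))) \<noteq> [] \<longrightarrow>
                card (hd (fst (snd (np_step M c (W, S # st, out))))) \<ge> 2)
           \<and> set (fst (snd (np_step M c (W, S # st, out)))) \<subseteq> {A, B} \<union> set st)"
proof -
  define L where "L = sort_key (\<lambda>i. - int (W' i)) (sorted_list_of_set S)"
  note LF = sortL_facts[OF fin L_def]
  define cuts where "cuts = {k. 0 < k \<and> k < length L \<and> real (W' (L ! (k - 1))) - real (W' (L ! k)) \<ge> M}"
  have step_eq: "np_step M c (W, S # st, out) =
     (if cuts = {} then (W', S # st, out)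
         else (let k = Min cuts in np_norm (W', set (take k L) # set (drop k L) # st, out)))"
    unfolding np_step.simps Let_def W'def[symmetric] L_def[symmetric] cuts_def[symmetric] by (rule refl)
  show ?thesis
  proof (cases "cuts = {}")
    case True
    have "\<not> (\<exists>y\<in>S. \<forall>z\<in>S - {y}. real (W' z) + M \<le> real (W' y))"
    proof
      assume "\<exists>y\<in>S. \<forall>z\<in>S - {y}. real (W' z) + M \<le> real (W' y)"
      then obtain y where y: "y \<in> S" "\<forall>z\<in>S - {y}. real (W' z) + M \<le> real (W' y)" by blast
      have len: "length L \<ge> 2" using LF(3) cardS by simp
      obtain q where q: "q < length L" "L ! q = y" using y(1) LF(1) by (metis in_set_conv_nth)
      have "W' (L ! q) \<le> W' (L ! 0)" using LF(4)[of 0 q] q by simp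
      have L0: "L ! 0 = y"
      proof (rule ccontr)
        assume "L ! 0 \<noteq> y"
        moreover have "L ! 0 \<in> S" using LF(1) len by (metis nth_mem less_le_trans zero_less_numeral)
        ultimately have "real (W' (L ! 0)) + M \<le> real (W' y)" using y by auto
        with \<open>W' (L ! q) \<le> W' (L ! 0)\<close> q Mpos show False by simp
      qed
      have "L ! 1 \<noteq> y" using LF(2) L0 len nth_eq_iff_index_eq[of L 1 0] by fastforce
      moreover have "L ! 1 \<in> S" using LF(1) len by (metis nth_mem less_le_trans one_less_numeral_iff semiring_norm(76))
      ultimately have "real (W' (L ! 1)) + M \<le> real (W' (L ! 0))" using y L0 by auto
      then have "1 \<in> cuts" unfolding cuts_def using len by auto
      with True show False by simp
    qed
    with True step_eq show ?thesis by simp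
  next
    case False
    have fincuts: "finite cuts" unfolding cuts_def by auto
    define k where "k = Min cuts"
    have kin: "k \<in> cuts" using False fincuts k_def by simp
    then have k: "0 < k" "k < length L" "real (W' (L ! (k - 1))) - real (W' (L ! k)) \<ge> M"
      unfolding cuts_def by auto
    define A where "A = set (take k L)"
    define B where "B = set (drop k L)"
    have AB: "A \<union> B = S" unfolding A_def B_def using LF(1)
      by (metis set_append append_take_drop_id)
    have ABd: "A \<inter> B = {}" unfolding A_def B_def using LF(2)
      by (metis append_take_drop_id distinct_append)
    have Ane: "A \<noteq> {}" unfolding A_def using k by auto
    have Bne: "B \<noteq> {}" unfolding B_def using k by auto
    have sep: "\<forall>i\<in>A. \<forall>j\<in>B. real (W' j) + M \<le> real (W' i)"
    proof (intro ballI)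
      fix i j assume "i \<in> A" "j \<in> B"
      obtain u where u: "u < k" "i = L ! u"
        using \<open>i \<in> A\<close> k unfolding A_def by (auto simp: in_set_conv_nth)
      obtain v where v: "k + v < length L" "j = L ! (k + v)"
        using \<open>j \<in> B\<close> k unfolding B_def apply (simp add: in_set_conv_nth) by (metis add.commute less_diff_conv)
      have "W' (L ! (k - 1)) \<le> W' i" using LF(4)[of u "k - 1"] u k by simp
      moreover have "W' j \<le> W' (L ! k)" using LF(4)[of k "k + v"] v by simp
      ultimately show "real (W' j) + M \<le> real (W' i)" using k(3) by simp
    qed
    have stB': "\<forall>B'\<in>set (A # B # st). B' \<noteq> {} \<and> finite B'"
      using stB Ane Bne unfolding A_def B_def by auto
    note N = np_norm_props[OF stB', of W' out]
    have res: "np_step M c (W, S # st, out) = np_norm (W', A # B # st, out)"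
      using step_eq False by (simp add: Let_def A_def B_def k_def)
    show ?thesis
      apply (rule disjI2)
      apply (rule exI[of _ A], rule exI[of _ B])
    proof (intro conjI)
      show "bl (np_step M c (W, S # st, out)) = map (\<lambda>i. {i}) out @ A # B # st"
        using N unfolding res by (simp add: bl_def)
      show "fst (np_step M c (W, S # st, out)) = W'" using N unfolding res by simp
      show "fst (snd (np_step M c (W, S # st, out))) \<noteq> [] \<longrightarrow>
                card (hd (fst (snd (np_step M c (W, S # st, out))))) \<ge> 2"
        using N unfolding res by blast
      show "set (fst (snd (np_step M c (W, S # st, out)))) \<subseteq> {A, B} \<union> set st"
        using N unfolding res by auto
    qed (use AB ABd Ane Bne sep in auto)
  qed
qed


definition sameb :: "nat set list \<Rightarrow> nat \<Rightarrow> nat \<Rightarrow> bool" where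
  "sameb X i j \<longleftrightarrow> (\<exists>u<length X. i \<in> X ! u \<and> j \<in> X ! u)"
definition befb :: "nat set list \<Rightarrow> nat \<Rightarrow> nat \<Rightarrow> bool" where
  "befb X i j \<longleftrightarrow> (\<exists>u v. u < v \<and> v < length X \<and> i \<in> X ! u \<and> j \<in> X ! v)"
definition disj :: "nat set list \<Rightarrow> bool" where
  "disj X \<longleftrightarrow> (\<forall>u<length X. \<forall>v<length X. u \<noteq> v \<longrightarrow> X ! u \<inter> X ! v = {})"

lemma nth_refine:
  "u < length (P @ A # B # T) \<Longrightarrow> (P @ A # B # T) ! u =
     (if u < length P then P ! u else if u = length P then A else if u = Suc (length P) then B
      else T ! (u - length P - 2))"
  by (auto simp: nth_append nth_Cons split: nat.split) (rule arg_cong[where f="(!) T"]; linarith)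

lemma nth_orig:
  "u < length (P @ S # T) \<Longrightarrow> (P @ S # T) ! u =
     (if u < length P then P ! u else if u = length P then S else T ! (u - length P - 1))"
  by (auto simp: nth_append nth_Cons split: nat.split) (rule arg_cong[where f="(!) T"]; linarith)

lemma disj_unique:
  assumes "disj X" "u < length X" "v < length X" "i \<in> X ! u" "i \<in> X ! v"
  shows "u = v"
  using assms unfolding disj_def by blast

lemma befb_antisym:
  assumes "disj X" "befb X i j"
  shows "\<not> befb X j i" "\<not> sameb X i j"
proof -
  from assms(2) obtain u v where uv: "u < v" "v < length X" "i \<in> X ! u" "j \<in> X ! v"
    unfolding befb_def by blast
  show "\<not> befb X j i"
  proof
    assume "befb X j i"
    then obtain u' v' where uv': "u' < v'" "v' < length X" "j \<in> X ! u'" "i \<in> X ! v'"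
      unfolding befb_def by blast
    have "u = v'" using disj_unique[OF assms(1), of u v' i] uv uv' by simp
    moreover have "v = u'" using disj_unique[OF assms(1), of v u' j] uv uv' by simp
    ultimately show False using uv uv' by simp
  qed
  show "\<not> sameb X i j"
  proof
    assume "sameb X i j"
    then obtain w where w: "w < length X" "i \<in> X ! w" "j \<in> X ! w" unfolding sameb_def by blast
    have "u = w" using disj_unique[OF assms(1), of u w i] uv w by simp
    moreover have "v = w" using disj_unique[OF assms(1), of v w j] uv w by simp
    ultimately show False using uv by simp
  qed
qed

context
  fixes P T :: "nat set list" and S A B :: "nat set"
  assumes AB: "A \<union> B = S"
begin

definition gmap :: "nat \<Rightarrow> nat" where
  "gmap u = (if u < length P then u else if u = length P \<or> u = Suc (length P) then length P else u - 1)"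

lemma gmap_sub: "u < length (P @ A # B # T) \<Longrightarrow>
   (P @ A # B # T) ! u \<subseteq> (P @ S # T) ! gmap u \<and> gmap u < length (P @ S # T)"
  using AB by (auto simp: nth_refine nth_orig gmap_def)

lemma R1: "\<not> (i \<in> S \<and> j \<in> S) \<Longrightarrow> sameb (P @ A # B # T) i j = sameb (P @ S # T) i j"
proof
  assume ij: "\<not> (i \<in> S \<and> j \<in> S)"
  { assume "sameb (P @ A # B # T) i j"
    then obtain u where u: "u < length (P @ A # B # T)" "i \<in> (P @ A # B # T) ! u" "j \<in> (P @ A # B # T) ! u"
      unfolding sameb_def by blast
    then show "sameb (P @ S # T) i j" unfolding sameb_def using gmap_sub[OF u(1)] by blast }
  { assume "sameb (P @ S # T) i j"
    then obtain u where u: "u < length (P @ S # T)" "i \<in> (P @ S # T) ! u" "j \<in> (P @ S # T) ! u"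
      unfolding sameb_def by blast
    show "sameb (P @ A # B # T) i j"
    proof (cases "u < length P")
      case True then show ?thesis using u unfolding sameb_def
        by (intro exI[of _ u]) (auto simp: nth_refine nth_orig)
    next
      case False
      have "u \<noteq> length P" using u ij by (auto simp: nth_append)
      with False have "u > length P" by simp
      then show ?thesis using u unfolding sameb_def
        by (intro exI[of _ "Suc u"]) (auto simp: nth_refine nth_orig)
    qed }
qed

lemma R2: "\<not> (i \<in> S \<and> j \<in> S) \<Longrightarrow> befb (P @ A # B # T) i j = befb (P @ S # T) i j"
proof
  assume ij: "\<not> (i \<in> S \<and> j \<in> S)"
  { assume "befb (P @ A # B # T) i j"
    then obtain u v where uv: "u < v" "v < length (P @ A # B # T)" "i \<in> (P @ A # B # T) ! u" "j \<in> (P @ A # B # T) ! v"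
      unfolding befb_def by blast
    have gu: "i \<in> (P @ S # T) ! gmap u" using gmap_sub[of u] uv by auto
    have gv: "j \<in> (P @ S # T) ! gmap v" "gmap v < length (P @ S # T)" using gmap_sub[of v] uv by auto
    have "gmap u < gmap v"
    proof -
      have "gmap u \<le> gmap v" using uv(1) by (auto simp: gmap_def)
      moreover have "gmap u \<noteq> gmap v"
      proof
        assume eq: "gmap u = gmap v"
        with uv(1) have "gmap u = length P" by (auto simp: gmap_def split: if_splits)
        then have "i \<in> S" "j \<in> S" using gu gv eq by (auto simp: nth_orig)
        with ij show False by simp
      qed
      ultimately show ?thesis by simp
    qed
    then show "befb (P @ S # T) i j" unfolding befb_def using gu gv by blast }
  { assume "befb (P @ S # T) i j"
    then obtain u v where uv: "u < v" "v < length (P @ S # T)" "i \<in> (P @ S # T) ! u" "j \<in> (P @ S # T) ! v"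
      unfolding befb_def by blast
    define h where "h = (\<lambda>w k. if w < length P then w else if w = length P then (if k \<in> A then w else Suc w) else Suc w)"
    have hi: "\<And>w k. w < length (P @ S # T) \<Longrightarrow> k \<in> (P @ S # T) ! w \<Longrightarrow>
       k \<in> (P @ A # B # T) ! (h w k) \<and> h w k < length (P @ A # B # T)"
      using AB by (auto simp: h_def nth_refine nth_orig)
    have "h u i < h v j"
      using uv ij AB by (auto simp: h_def nth_orig)
    then show "befb (P @ A # B # T) i j" unfolding befb_def using hi[of u i] hi[of v j] uv
      by (metis less_trans) }
qed

lemma R3: "i \<in> A \<Longrightarrow> j \<in> B \<Longrightarrow> befb (P @ A # B # T) i j"
  unfolding befb_def by (intro exI[of _ "length P"] exI[of _ "Suc (length P)"]) (auto simp: nth_append)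

lemma R4: "i \<in> A \<Longrightarrow> j \<in> A \<Longrightarrow> sameb (P @ A # B # T) i j"
          "i \<in> B \<Longrightarrow> j \<in> B \<Longrightarrow> sameb (P @ A # B # T) i j"
  unfolding sameb_def
  by (intro exI[of _ "length P"], simp add: nth_append) (intro exI[of _ "Suc (length P)"], simp add: nth_append)

lemma R5: "disj (P @ S # T) \<Longrightarrow> A \<inter> B = {} \<Longrightarrow> disj (P @ A # B # T)"
  unfolding disj_def
proof (intro allI impI)
  fix u v assume D: "\<forall>u<length (P @ S # T). \<forall>v<length (P @ S # T). u \<noteq> v \<longrightarrow> (P @ S # T) ! u \<inter> (P @ S # T) ! v = {}"
    and AB0: "A \<inter> B = {}" and uv: "u < length (P @ A # B # T)" "v < length (P @ A # B # T)" "u \<noteq> v"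
  show "(P @ A # B # T) ! u \<inter> (P @ A # B # T) ! v = {}"
  proof (cases "gmap u = gmap v")
    case True
    with uv have "(u = length P \<and> v = Suc (length P)) \<or> (v = length P \<and> u = Suc (length P))"
      by (auto simp: gmap_def split: if_splits)
    then show ?thesis using AB0 by (auto simp: nth_append)
  next
    case False
    then show ?thesis using D gmap_sub[OF uv(1)] gmap_sub[OF uv(2)] by blast
  qed
qed

end


locale np =
  fixes K :: nat and p M :: real and f :: "nat \<Rightarrow> nat set \<Rightarrow> real" and \<sigma> :: "nat \<Rightarrow> nat"
  assumes K2: "K \<ge> 2" and p0: "0 < p" and p1: "p < 1" and M0: "M > 0"
    and pref: "is_pref K f" and rank: "is_ranking K p f \<sigma>"
begin

definition Inv :: "np_state \<Rightarrow> bool" where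
  "Inv s \<longleftrightarrow> disj (bl s) \<and> (\<forall>B\<in>set (bl s). B \<noteq> {}) \<and> \<Union>(set (bl s)) = {1..K}
     \<and> (fst (snd s) \<noteq> [] \<longrightarrow> card (hd (fst (snd s))) \<ge> 2)"

lemma Inv_head:
  assumes "Inv (W, S # st, out)"
  shows "S \<subseteq> {1..K}" "finite S" "card S \<ge> 2" "S \<in> setsK K" "\<forall>B\<in>set st. B \<noteq> {} \<and> finite B"
    "bl (W, S # st, out) ! length out = S" "length out < length (bl (W, S # st, out))"
proof -
  have U: "\<Union>(set (bl (W, S # st, out))) = {1..K}" using assms unfolding Inv_def by blast
  show S: "S \<subseteq> {1..K}" using U by (auto simp: bl_def)
  then show "finite S" using finite_subset by blast
  show "card S \<ge> 2" using assms unfolding Inv_def by simp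
  with S show "S \<in> setsK K" unfolding setsK_def by simp
  show "\<forall>B\<in>set st. B \<noteq> {} \<and> finite B"
  proof
    fix B assume B: "B \<in> set st"
    then have "B \<subseteq> {1..K}" using U by (auto simp: bl_def)
    then have "finite B" using finite_subset by blast
    moreover have "B \<noteq> {}" using assms B unfolding Inv_def by (auto simp: bl_def)
    ultimately show "B \<noteq> {} \<and> finite B" by simp
  qed
  show "bl (W, S # st, out) ! length out = S" by (simp add: bl_def nth_append)
  show "length out < length (bl (W, S # st, out))" by (simp add: bl_def)
qed

lemma Inv_step:
  assumes "Inv s"
  shows "Inv (np_step M c s)"
proof (cases s)
  case (fields W st out)
  show ?thesis
  proof (cases st)
    case Nil
    then show ?thesis using assms fields by simp
  next
    case (Cons S st')
    note s = fields[unfolded Cons]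
    note H = Inv_head[OF assms[unfolded s]]
    define W' where "W' = W(c S := Suc (W (c S)))"
    from step_cases[where S=S and st=st' and W'=W' and W=W and c=c and out=out, OF H(2) M0 H(3) H(5) W'_def]
    show ?thesis
    proof (elim disjE exE conjE)
      assume "np_step M c (W, S # st', out) = (W', S # st', out)"
      then show ?thesis using assms unfolding s Inv_def by (simp add: bl_def)
    next
      fix A B
      assume bl': "bl (np_step M c (W, S # st', out)) = map (\<lambda>i. {i}) out @ A # B # st'"
        and AB: "A \<union> B = S" "A \<inter> B = {}" "A \<noteq> {}" "B \<noteq> {}"
        and hd': "fst (snd (np_step M c (W, S # st', out))) \<noteq> [] \<longrightarrow>
                card (hd (fst (snd (np_step M c (W, S # st', out))))) \<ge> 2"
      have bls: "bl s = map (\<lambda>i. {i}) out @ S # st'" by (simp add: s bl_def)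
      have "disj (bl s)" using assms Inv_def by blast
      then have d: "disj (map (\<lambda>i. {i}) out @ A # B # st')"
        using R5[OF AB(1)] AB(2) bls by simp
      have ne: "\<forall>B\<in>set (bl s). B \<noteq> {}" using assms Inv_def by blast
      have un: "\<Union>(set (bl s)) = {1..K}" using assms Inv_def by blast
      have ne': "\<forall>B'\<in>set (map (\<lambda>i. {i}) out @ A # B # st'). B' \<noteq> {}"
        using ne AB(3,4) unfolding bls by simp
      have "\<Union>(set (map (\<lambda>i. {i}) out @ A # B # st')) = \<Union>(set (map (\<lambda>i. {i}) out @ S # st'))"
        using AB(1) by auto
      then have un': "\<Union>(set (map (\<lambda>i. {i}) out @ A # B # st')) = {1..K}" using un bls by simp
      have "Inv (np_step M c (W, S # st', out))" unfolding Inv_def bl'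
        using d ne' un' hd' by (intro conjI) (assumption | rule hd')+
      then show ?thesis using s by simp
    qed
  qed
qed

definition s0 :: np_state where "s0 = (\<lambda>_. 0, [{1..K}], [])"

lemma s0_eq: "np_norm (\<lambda>_. 0, [{1..K}], []) = s0"
  using K2 by (simp add: s0_def)

lemma Inv_s0: "Inv s0"
  using K2 by (auto simp: Inv_def s0_def bl_def disj_def)

end

lemma pow_ge1: "0 < (p::real) \<Longrightarrow> p \<le> 1 \<Longrightarrow> n \<le> 0 \<Longrightarrow> 1 \<le> p powi n"
proof -
  assume h: "0 < p" "p \<le> 1" "n \<le> 0"
  then have "p powi n = inverse (p ^ nat (- n))"
    by (simp add: power_int_def power_inverse)
  moreover have "p ^ nat (- n) \<le> 1" "0 < p ^ nat (- n)" using h by (auto simp: power_le_one)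
  ultimately show ?thesis by (simp add: one_le_inverse)
qed

lemma sum_g:
  fixes F :: "nat \<Rightarrow> real"
  assumes "finite S" "a \<in> S" "b \<in> S" "a \<noteq> b" "(\<Sum>x\<in>S. F x) = 1" "F b \<le> p * F a" "0 < p" "p < 1"
    "F a \<ge> 0"
  shows "(\<Sum>x\<in>S. F x * (if x = b then inverse p else if x = a then p else 1)) \<le> 1"
proof -
  have eq: "\<And>x. F x * (if x = b then inverse p else if x = a then p else 1) =
      F x + (if x = b then F x * (inverse p - 1) else 0) + (if x = a then F x * (p - 1) else 0)"
    using assms(4) by (auto simp: algebra_simps)
  have "(\<Sum>x\<in>S. F x * (if x = b then inverse p else if x = a then p else 1)) =
        (\<Sum>x\<in>S. F x) + F b * (inverse p - 1) + F a * (p - 1)"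
    unfolding eq sum.distrib using assms(1-3) by (simp add: sum.delta)
  also have "\<dots> \<le> 1"
  proof -
    have "F b * (inverse p - 1) \<le> (p * F a) * (inverse p - 1)"
      using assms(6-8) by (intro mult_right_mono) (auto simp: field_simps)
    also have "\<dots> = F a * (1 - p)" using assms(7) by (simp add: field_simps)
    finally show ?thesis using assms(5) by (simp add: algebra_simps)
  qed
  finally show ?thesis .
qed

context np begin

definition m :: nat where "m = nat \<lceil>M\<rceil>"
definition ak :: "nat \<Rightarrow> nat" where "ak k = inv_into {1..K} \<sigma> k"

definition phi :: "np_state \<Rightarrow> nat \<Rightarrow> real" where
  "phi s k = (let W = fst s; a = ak k; b = ak (Suc k) in
     if sameb (bl s) a b then p powi (int m - (int (W b) - int (W a)))
     else if befb (bl s) b a then 1 else 0)"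

definition Phi :: "np_state \<Rightarrow> real" where
  "Phi s = (\<Sum>k\<in>{1..<K}. phi s k)"

lemma m_ge: "M \<le> real m" "int m = \<lceil>M\<rceil>" "m \<ge> 1"
proof -
  have c: "\<lceil>M\<rceil> \<ge> 1" using M0 by (simp add: one_le_ceiling) 
  show "M \<le> real m" "int m = \<lceil>M\<rceil>" using c by (auto simp: m_def)
  have "int m \<ge> 1" using c \<open>int m = \<lceil>M\<rceil>\<close> by simp
  then show "m \<ge> 1" by linarith
qed

lemma bij_sigma: "bij_betw \<sigma> {1..K} {1..K}" using rank unfolding is_ranking_def by blast

lemma ak_props:
  assumes "k \<in> {1..K}"
  shows "ak k \<in> {1..K}" "\<sigma> (ak k) = k"
proof -
  have "k \<in> \<sigma> ` {1..K}" using assms bij_sigma by (simp add: bij_betw_def)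
  then show "ak k \<in> {1..K}" unfolding ak_def by (rule inv_into_into)
  show "\<sigma> (ak k) = k" unfolding ak_def using bij_sigma assms by (rule bij_betw_inv_into_right)
qed

lemma pair_props:
  assumes "k \<in> {1..<K}"
  shows "ak k \<in> {1..K}" "ak (Suc k) \<in> {1..K}" "ak k \<noteq> ak (Suc k)" "\<sigma> (ak k) < \<sigma> (ak (Suc k))"
proof -
  have k1: "k \<in> {1..K}" "Suc k \<in> {1..K}" using assms by auto
  show "ak k \<in> {1..K}" "ak (Suc k) \<in> {1..K}" using ak_props k1 by auto
  show "\<sigma> (ak k) < \<sigma> (ak (Suc k))" using ak_props(2)[OF k1(1)] ak_props(2)[OF k1(2)] by simp
  then show "ak k \<noteq> ak (Suc k)" by auto
qed

lemma phi_nonneg: "phi s k \<ge> 0"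
  using p0 by (simp add: phi_def Let_def)

lemma pref_S: "S \<in> setsK K \<Longrightarrow> (\<Sum>i\<in>S. f i S) = 1"
  "S \<in> setsK K \<Longrightarrow> i \<in> S \<Longrightarrow> f i S > 0"
  using pref unfolding is_pref_def setsK_def by auto

lemma rank_S: "S \<in> setsK K \<Longrightarrow> i \<in> S \<Longrightarrow> i' \<in> S \<Longrightarrow> \<sigma> i' < \<sigma> i \<Longrightarrow> f i S \<le> p * f i' S"
  using rank unfolding is_ranking_def by blast

lemma sameb_sym: "sameb X i j = sameb X j i" unfolding sameb_def by blast

end

lemma sameb_out:
  assumes "disj X" "w < length X" "X ! w = S" "sameb X a b" "\<not> (a \<in> S \<and> b \<in> S)"
  shows "a \<notin> S" "b \<notin> S"
proof -
  obtain u where u: "u < length X" "a \<in> X ! u" "b \<in> X ! u" using assms(4) unfolding sameb_def by blast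
  show "a \<notin> S"
  proof
    assume "a \<in> S"
    then have "u = w" using disj_unique[OF assms(1) u(1) assms(2) u(2)] assms(3) by simp
    then show False using u assms(3,5) \<open>a \<in> S\<close> by simp
  qed
  show "b \<notin> S"
  proof
    assume "b \<in> S"
    then have "u = w" using disj_unique[OF assms(1) u(1) assms(2) u(3)] assms(3) by simp
    then show False using u assms(3,5) \<open>b \<in> S\<close> by simp
  qed
qed

context np begin

lemma phi_step:
  assumes Inv: "Inv (W, S # st, out)" and k: "k \<in> {1..<K}"
  shows "(\<Sum>x\<in>S. f x S * phi (np_step M (\<lambda>_. x) (W, S # st, out)) k) \<le> phi (W, S # st, out) k"
proof -
  define s where "s = (W, S # st, out)"
  note H = Inv_head[OF Inv]
  define a where "a = ak k"
  define b where "b = ak (Suc k)"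
  note PP = pair_props[OF k, folded a_def b_def]
  define P where "P = map (\<lambda>i. {i}) out"
  have blS: "bl s = P @ S # st" by (simp add: s_def P_def bl_def)
  have lenP: "length P = length out" by (simp add: P_def)
  have disjs: "disj (bl s)" using Inv unfolding Inv_def s_def by blast
  have fnn: "\<forall>x\<in>S. f x S \<ge> 0" using pref_S(2)[OF H(4)] by (auto intro: less_imp_le)
  have phi_eq: "\<And>s'. phi s' k = (if sameb (bl s') a b then p powi (int m - (int (fst s' b) - int (fst s' a)))
       else if befb (bl s') b a then 1 else 0)"
    by (simp add: phi_def a_def b_def Let_def)
  have SC: "\<And>x. (np_step M (\<lambda>_. x) s = (W(x := Suc (W x)), S # st, out) \<and>
           \<not> (\<exists>y\<in>S. \<forall>z\<in>S - {y}. real ((W(x := Suc (W x))) z) + M \<le> real ((W(x := Suc (W x))) y)))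
       \<or> (\<exists>A B. bl (np_step M (\<lambda>_. x) s) = P @ A # B # st
           \<and> fst (np_step M (\<lambda>_. x) s) = W(x := Suc (W x))
           \<and> A \<union> B = S \<and> A \<inter> B = {} \<and> A \<noteq> {} \<and> B \<noteq> {}
           \<and> (\<forall>i\<in>A. \<forall>j\<in>B. real ((W(x := Suc (W x))) j) + M \<le> real ((W(x := Suc (W x))) i)))"
  proof -
    fix x
    show "?thesis x" unfolding s_def P_def
      apply (rule disj_forward[OF step_cases[where S=S and st=st and W'="W(x := Suc (W x))" and W=W and c="\<lambda>_. x" and out=out,
          OF H(2) M0 H(3) H(5) refl]])
       apply (erule conjE, rule conjI, assumption, assumption)
      apply (elim exE conjE)
      apply (rule exI, rule exI, (rule conjI, assumption)+, assumption)
      done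
  qed
  have disj': "\<And>x. disj (bl (np_step M (\<lambda>_. x) s))"
    using Inv_step[OF Inv[folded s_def]] unfolding Inv_def by blast
  show ?thesis
  proof (cases "a \<in> S \<and> b \<in> S")
    case True
    define D where "D = int (W b) - int (W a)"
    define g where "g = (\<lambda>x. if x = b then inverse p else if x = a then p else 1)"
    have sameS: "sameb (bl s) a b" unfolding sameb_def blS
      using True by (intro exI[of _ "length P"]) (simp add: nth_append)
    have phis: "phi s k = p powi (int m - D)" using sameS by (simp add: phi_eq s_def D_def)
    have bound: "phi (np_step M (\<lambda>_. x) s) k \<le> p powi (int m - D) * g x" if xS: "x \<in> S" for x
    proof -
      define W' where "W' = W(x := Suc (W x))"
      have pw: "p powi (int m - (int (W' b) - int (W' a))) = p powi (int m - D) * g x"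
      proof -
        have "x = b \<or> x = a \<or> (x \<noteq> a \<and> x \<noteq> b)" by blast
        then show ?thesis
        proof (elim disjE)
          assume xb: "x = b"
          then have e: "int m - (int (W' b) - int (W' a)) = (int m - D) - 1"
            using PP(3) by (simp add: W'_def D_def)
          have e2: "p powi ((int m - D) - 1) = p powi (int m - D) * inverse p"
            using p0 by (subst power_int_diff) (auto simp: divide_inverse)
          have e3: "g x = inverse p" using xb by (simp add: g_def)
          show ?thesis by (simp only: e e2 e3)
        next
          assume xa: "x = a"
          then have e: "int m - (int (W' b) - int (W' a)) = (int m - D) + 1"
            using PP(3) by (simp add: W'_def D_def)
          have e2: "p powi ((int m - D) + 1) = p powi (int m - D) * p"
            using p0 by (subst power_int_add) auto
          have e3: "g x = p" using xa PP(3) by (simp add: g_def)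
          show ?thesis by (simp only: e e2 e3)
        next
          assume "x \<noteq> a \<and> x \<noteq> b"
          then show ?thesis by (simp add: g_def W'_def D_def)
        qed
      qed
      have pos: "p powi (int m - (int (W' b) - int (W' a))) > 0" using p0 by simp
      have "phi (np_step M (\<lambda>_. x) s) k \<le> p powi (int m - (int (W' b) - int (W' a)))"
        using SC[of x]
      proof (elim disjE exE conjE)
        assume st1: "np_step M (\<lambda>_. x) s = (W(x := Suc (W x)), S # st, out)"
        have "bl (np_step M (\<lambda>_. x) s) = bl s" unfolding st1 by (simp add: s_def bl_def)
        then show ?thesis using sameS unfolding phi_eq[of "np_step M (\<lambda>_. x) s"] unfolding st1
          by (simp add: W'_def)
      next
        fix A B
        assume bl': "bl (np_step M (\<lambda>_. x) s) = P @ A # B # st"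
          and fst': "fst (np_step M (\<lambda>_. x) s) = W(x := Suc (W x))"
          and AB: "A \<union> B = S" "A \<inter> B = {}"
          and sep: "\<forall>i\<in>A. \<forall>j\<in>B. real ((W(x := Suc (W x))) j) + M \<le> real ((W(x := Suc (W x))) i)"
        have dY: "disj (P @ A # B # st)" using disj'[of x] bl' by simp
        have "(a \<in> A \<and> b \<in> A) \<or> (a \<in> B \<and> b \<in> B) \<or> (a \<in> A \<and> b \<in> B) \<or> (a \<in> B \<and> b \<in> A)"
          using True AB(1) by blast
        then show ?thesis
        proof (elim disjE conjE)
          assume "a \<in> A" "b \<in> A"
          then have "sameb (P @ A # B # st) a b" by (rule R4(1)[OF AB(1)])
          then show ?thesis by (simp add: phi_eq bl' fst' W'_def)
        next
          assume "a \<in> B" "b \<in> B"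
          then have "sameb (P @ A # B # st) a b" by (rule R4(2)[OF AB(1)])
          then show ?thesis by (simp add: phi_eq bl' fst' W'_def)
        next
          assume "a \<in> A" "b \<in> B"
          then have "befb (P @ A # B # st) a b" by (rule R3[OF AB(1)])
          note ba = befb_antisym[OF dY this]
          have "phi (np_step M (\<lambda>_. x) s) k = 0" using ba by (simp add: phi_eq bl')
          then show ?thesis using pos by simp
        next
          assume "a \<in> B" "b \<in> A"
          then have bef: "befb (P @ A # B # st) b a" using R3[OF AB(1)] by blast
          note ba = befb_antisym[OF dY this]
          have "phi (np_step M (\<lambda>_. x) s) k = 1" using ba bef sameb_sym by (simp add: phi_eq bl')
          moreover have "real (W' a) + M \<le> real (W' b)" using sep \<open>a \<in> B\<close> \<open>b \<in> A\<close> by (simp add: W'_def)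
          then have "M \<le> real_of_int (int (W' b) - int (W' a))" by simp
          then have "\<lceil>M\<rceil> \<le> int (W' b) - int (W' a)" by (simp add: ceiling_le_iff)
          then have "int m - (int (W' b) - int (W' a)) \<le> 0" using m_ge(2) by simp
          then have "1 \<le> p powi (int m - (int (W' b) - int (W' a)))"
            using p0 p1 by (intro pow_ge1) auto
          ultimately show ?thesis by simp
        qed
      qed
      then show ?thesis using pw by simp
    qed
    have "(\<Sum>x\<in>S. f x S * phi (np_step M (\<lambda>_. x) s) k) \<le> (\<Sum>x\<in>S. f x S * (p powi (int m - D) * g x))"
      using bound fnn by (intro sum_mono mult_left_mono) auto
    also have "\<dots> = p powi (int m - D) * (\<Sum>x\<in>S. f x S * g x)"
      by (simp add: sum_distrib_left algebra_simps)
    also have "\<dots> \<le> p powi (int m - D) * 1"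
    proof (intro mult_left_mono)
      show "(\<Sum>x\<in>S. f x S * g x) \<le> 1" unfolding g_def
        using sum_g[of S a b "\<lambda>x. f x S" p] H(2) True PP(3) pref_S(1)[OF H(4)]
          rank_S[OF H(4), of b a] PP(4) p0 p1 fnn by auto
      show "0 \<le> p powi (int m - D)" using p0 by simp
    qed
    finally show ?thesis using phis s_def by simp
  next
    case False
    have same: "phi (np_step M (\<lambda>_. x) s) k = phi s k" if xS: "x \<in> S" for x
    proof -
      have Wsame: "(W(x := Suc (W x))) a = W a \<and> (W(x := Suc (W x))) b = W b" if "sameb (bl s) a b"
      proof -
        have "a \<notin> S" "b \<notin> S"
          using sameb_out[OF disjs, of "length P" S a b] that False blS by (simp_all add: nth_append)
        then show ?thesis using xS by auto
      qed
      show ?thesis using SC[of x]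
      proof (elim disjE exE conjE)
        assume st1: "np_step M (\<lambda>_. x) s = (W(x := Suc (W x)), S # st, out)"
        have "bl (np_step M (\<lambda>_. x) s) = bl s" unfolding st1 by (simp add: s_def bl_def)
        then show ?thesis using Wsame unfolding phi_eq[of "np_step M (\<lambda>_. x) s"] phi_eq[of s]
          unfolding st1 by (simp add: s_def)
      next
        fix A B
        assume bl': "bl (np_step M (\<lambda>_. x) s) = P @ A # B # st"
          and fst': "fst (np_step M (\<lambda>_. x) s) = W(x := Suc (W x))"
          and AB: "A \<union> B = S"
        have e1: "sameb (P @ A # B # st) a b = sameb (bl s) a b"
          using R1[OF AB, of a b] False blS by simp
        have e2: "befb (P @ A # B # st) b a = befb (bl s) b a"
          using R2[OF AB, of b a] False blS by auto
        show ?thesis using e1 e2 Wsame unfolding phi_eq[of "np_step M (\<lambda>_. x) s"] phi_eq[of s] bl' fst'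
          by (simp add: s_def)
      qed
    qed
    have "(\<Sum>x\<in>S. f x S * phi (np_step M (\<lambda>_. x) s) k) = (\<Sum>x\<in>S. f x S * phi s k)"
      using same by simp
    also have "\<dots> = phi s k" using pref_S(1)[OF H(4)] by (simp add: sum_distrib_right[symmetric])
    finally show ?thesis by (simp add: s_def)
  qed
qed

end

lemma squeeze:
  fixes q :: "nat \<Rightarrow> nat"
  assumes inc: "\<And>k. 1 \<le> k \<Longrightarrow> k < K \<Longrightarrow> q k < q (Suc k)"
    and bnd: "\<And>k. 1 \<le> k \<Longrightarrow> k \<le> K \<Longrightarrow> q k < K"
    and k: "1 \<le> k" "k \<le> K"
  shows "q k = k - 1"
proof -
  have A: "\<And>k' j. 1 \<le> k' \<Longrightarrow> k' + j \<le> K \<Longrightarrow> q k' + j \<le> q (k' + j)"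
  proof -
    fix k' j show "1 \<le> k' \<Longrightarrow> k' + j \<le> K \<Longrightarrow> q k' + j \<le> q (k' + j)"
    proof (induction j)
      case 0 then show ?case by simp
    next
      case (Suc j)
      then have "q k' + j \<le> q (k' + j)" by simp
      moreover have "q (k' + j) < q (Suc (k' + j))" using Suc.prems by (intro inc) auto
      ultimately show ?case by simp
    qed
  qed
  have "q 1 + (k - 1) \<le> q (1 + (k - 1))" using A[of 1 "k - 1"] k by simp
  then have lo: "k - 1 \<le> q k" using k by simp
  have "q k + (K - k) \<le> q (k + (K - k))" using A[of k "K - k"] k by simp
  moreover have "q K < K" using bnd[of K] k by simp
  ultimately have "q k \<le> k - 1" using k by simp
  with lo show ?thesis by simp
qed

context np begin

lemma Phi_step:
  assumes Inv: "Inv (W, S # st, out)"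
  shows "(\<Sum>x\<in>S. f x S * Phi (np_step M (\<lambda>_. x) (W, S # st, out))) \<le> Phi (W, S # st, out)"
proof -
  have "(\<Sum>x\<in>S. f x S * Phi (np_step M (\<lambda>_. x) (W, S # st, out)))
      = (\<Sum>k\<in>{1..<K}. \<Sum>x\<in>S. f x S * phi (np_step M (\<lambda>_. x) (W, S # st, out)) k)"
    unfolding Phi_def sum_distrib_left by (rule sum.swap)
  also have "\<dots> \<le> (\<Sum>k\<in>{1..<K}. phi (W, S # st, out) k)"
    by (intro sum_mono phi_step[OF Inv])
  finally show ?thesis unfolding Phi_def .
qed

lemma Phi_nonneg: "Phi s \<ge> 0"
  unfolding Phi_def by (intro sum_nonneg phi_nonneg)

lemma Phi_s0: "Phi s0 = real (K - 1) * p ^ m"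
proof -
  have "phi s0 k = p ^ m" if "k \<in> {1..<K}" for k
  proof -
    note PP = pair_props[OF that]
    have "sameb (bl s0) (ak k) (ak (Suc k))" using PP unfolding sameb_def
      by (intro exI[of _ 0]) (simp add: s0_def bl_def)
    then show ?thesis by (simp add: phi_def s0_def)
  qed
  then show ?thesis unfolding Phi_def by simp
qed

lemma Phi_terminal:
  assumes Inv: "Inv (W, [], out)"
    and bad: "\<not> (length out = K \<and> (\<forall>k<K. \<sigma> (out ! k) = Suc k))"
  shows "Phi (W, [], out) \<ge> 1"
proof -
  define s where "s = (W, [] :: nat set list, out)"
  have bls: "bl s = map (\<lambda>i. {i}) out" by (simp add: s_def bl_def)
  have dj: "disj (map (\<lambda>i. {i}) out)" using Inv bls unfolding Inv_def s_def by simp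
  have dist: "distinct out"
    unfolding distinct_conv_nth
  proof (intro allI impI)
    fix u v assume uv: "u < length out" "v < length out" "u \<noteq> v"
    then have "{out ! u} \<inter> {out ! v} = {}" using dj unfolding disj_def by auto
    then show "out ! u \<noteq> out ! v" by auto
  qed
  have setout: "set out = {1..K}" using Inv bls unfolding Inv_def s_def by auto
  have len: "length out = K" using distinct_card[OF dist] setout by simp
  with bad have bad': "\<not> (\<forall>k<K. \<sigma> (out ! k) = Suc k)" by simp
  have befb_out: "befb (bl s) i j \<longleftrightarrow> (\<exists>u v. u < v \<and> v < K \<and> out ! u = i \<and> out ! v = j)" for i j
  proof
    assume "befb (bl s) i j"
    then obtain u v where "u < v" "v < length out" "i \<in> {out ! u}" "j \<in> {out ! v}"
      unfolding befb_def bls by auto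
    then show "\<exists>u v. u < v \<and> v < K \<and> out ! u = i \<and> out ! v = j" using len by auto
  next
    assume "\<exists>u v. u < v \<and> v < K \<and> out ! u = i \<and> out ! v = j"
    then obtain u v where "u < v" "v < K" "out ! u = i" "out ! v = j" by blast
    then show "befb (bl s) i j" unfolding befb_def bls using len
      by (intro exI[of _ u] exI[of _ v]) auto
  qed
  have "\<exists>k\<in>{1..<K}. befb (bl s) (ak (Suc k)) (ak k)"
  proof (rule ccontr)
    assume nob: "\<not> (\<exists>k\<in>{1..<K}. befb (bl s) (ak (Suc k)) (ak k))"
    define q where "q k = (SOME u. u < K \<and> out ! u = ak k)" for k
    have q: "q k < K \<and> out ! q k = ak k" if "k \<in> {1..K}" for k
    proof -
      have "ak k \<in> set out" using ak_props(1)[OF that] setout by simp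
      then have "\<exists>u. u < K \<and> out ! u = ak k" using len by (auto simp: in_set_conv_nth)
      then show ?thesis unfolding q_def by (rule someI_ex)
    qed
    have inc: "q k < q (Suc k)" if "1 \<le> k" "k < K" for k
    proof -
      have k1: "k \<in> {1..K}" "Suc k \<in> {1..K}" using that by auto
      have ne: "q k \<noteq> q (Suc k)" using q[OF k1(1)] q[OF k1(2)] pair_props(3)[of k] that by auto
      show ?thesis
      proof (rule ccontr)
        assume "\<not> q k < q (Suc k)"
        with ne have "q (Suc k) < q k" by simp
        then have "befb (bl s) (ak (Suc k)) (ak k)" unfolding befb_out using q[OF k1(1)] q[OF k1(2)] by blast
        with nob that show False by auto
      qed
    qed
    have qk: "q k = k - 1" if "1 \<le> k" "k \<le> K" for k
      using squeeze[of K q k] inc q that by auto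
    have "\<forall>k<K. \<sigma> (out ! k) = Suc k"
    proof (intro allI impI)
      fix j assume "j < K"
      then have j1: "Suc j \<in> {1..K}" by auto
      have "out ! j = ak (Suc j)" using q[OF j1] qk[of "Suc j"] j1 by auto
      then show "\<sigma> (out ! j) = Suc j" using ak_props(2)[OF j1] by simp
    qed
    with bad' show False by simp
  qed
  then obtain k where k: "k \<in> {1..<K}" "befb (bl s) (ak (Suc k)) (ak k)" by blast
  have ns: "\<not> sameb (bl s) (ak k) (ak (Suc k))"
    using pair_props(3)[OF k(1)] unfolding sameb_def bls by auto
  have "phi s k = 1" using ns k(2) by (simp add: phi_def)
  moreover have "phi s k \<le> Phi s" unfolding Phi_def
    using k(1) by (intro member_le_sum phi_nonneg) auto
  ultimately show ?thesis by (simp add: s_def)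
qed

end

fun runM :: "real \<Rightarrow> np_state \<Rightarrow> (nat \<Rightarrow> (nat set \<Rightarrow> nat)) \<Rightarrow> nat \<Rightarrow> np_state" where
  "runM M s \<omega> 0 = s"
| "runM M s \<omega> (Suc n) = runM M (np_step M (\<omega> 0) s) (\<lambda>k. \<omega> (Suc k)) n"

lemma runM_Suc': "runM M s \<omega> (Suc n) = np_step M (\<omega> n) (runM M s \<omega> n)"
proof (induction n arbitrary: s \<omega>)
  case 0 then show ?case by simp
next
  case (Suc n)
  have "runM M s \<omega> (Suc (Suc n)) = runM M (np_step M (\<omega> 0) s) (\<lambda>k. \<omega> (Suc k)) (Suc n)" by simp
  also have "\<dots> = np_step M (\<omega> (Suc n)) (runM M (np_step M (\<omega> 0) s) (\<lambda>k. \<omega> (Suc k)) n)"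
    by (rule Suc.IH)
  also have "\<dots> = np_step M (\<omega> (Suc n)) (runM M s \<omega> (Suc n))" by simp
  finally show ?case .
qed

lemma np_run_eq: "np_run K M \<omega> t = runM M (np_norm (\<lambda>_. 0, [{1..K}], [])) \<omega> t"
proof (induction t)
  case 0 show ?case by (simp only: np_run.simps runM.simps)
next
  case (Suc t) show ?case by (simp only: np_run.simps runM_Suc' Suc.IH)
qed

lemma np_step_head: "np_step M c (W, S # st, out) = np_step M (\<lambda>_. c S) (W, S # st, out)"
  by (simp only: np_step.simps Let_def)

lemma np_step_nil: "np_step M c (W, [], out) = (W, [], out)"
  by simp

context np begin

lemma runM_cong:
  assumes "Inv s" "\<forall>k<n. \<forall>S\<subseteq>{1..K}. \<omega> k S = \<omega>' k S"
  shows "runM M s \<omega> n = runM M s \<omega>' n"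
  using assms
proof (induction n arbitrary: s \<omega> \<omega>')
  case 0 then show ?case by simp
next
  case (Suc n)
  have eq: "np_step M (\<omega> 0) s = np_step M (\<omega>' 0) s"
  proof (cases s)
    case (fields W st out)
    show ?thesis
    proof (cases st)
      case Nil then show ?thesis using fields by simp
    next
      case (Cons S st')
      have "S \<subseteq> {1..K}" using Inv_head(1) Suc.prems(1) fields Cons by simp
      then have "\<omega> 0 S = \<omega>' 0 S" using Suc.prems(2) by simp
      then show ?thesis using fields Cons np_step_head[of M "\<omega> 0"] np_step_head[of M "\<omega>' 0"] by metis
    qed
  qed
  have "runM M (np_step M (\<omega>' 0) s) (\<lambda>k. \<omega> (Suc k)) n = runM M (np_step M (\<omega>' 0) s) (\<lambda>k. \<omega>' (Suc k)) n"
    using Suc.prems by (intro Suc.IH Inv_step) auto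
  then show ?case using eq by simp
qed

abbreviation CF where "CF \<equiv> choice_fun_pmf K f"
abbreviation Om where "Om \<equiv> Omega K f"

lemma Om_def': "Om = PiM UNIV (\<lambda>_. measure_pmf CF)" by (simp add: Omega_def)

lemma prob_Om: "prob_space Om"
  unfolding Omega_def by (intro prob_space_PiM prob_space_measure_pmf)

lemma meas_coord: "(\<lambda>\<omega>. \<omega> k S) \<in> measurable Om (count_space UNIV)"
proof -
  have "(\<lambda>\<omega>. \<omega> k) \<in> measurable Om (measure_pmf CF)"
    unfolding Omega_def by (rule measurable_component_singleton) simp
  moreover have "(\<lambda>c. c S) \<in> measurable (measure_pmf CF) (count_space UNIV)" by simp
  ultimately show ?thesis by (rule measurable_compose)
qed

lemma meas_run:
  assumes "Inv s"
  shows "(\<lambda>\<omega>. runM M s \<omega> n) \<in> measurable Om (count_space UNIV)"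
proof -
  define D where "D = {..<n} \<times> Pow {1..K}"
  define I where "I = PiE D (\<lambda>_. UNIV :: nat set)"
  have finD: "finite D" unfolding D_def by simp
  have cI: "countable I" unfolding I_def by (intro countable_PiE finD) simp
  define g where "g \<omega> = restrict (\<lambda>(k, S). \<omega> k S) D" for \<omega> :: "nat \<Rightarrow> nat set \<Rightarrow> nat"
  have g_in: "g \<omega> \<in> I" for \<omega> unfolding g_def I_def by simp
  have gm: "g \<in> measurable Om (count_space I)"
  proof (subst measurable_count_space_eq_countable[OF cI], intro conjI ballI)
    show "g \<in> space Om \<rightarrow> I" using g_in by simp
    fix d assume d: "d \<in> I"
    have "g -` {d} \<inter> space Om = {\<omega> \<in> space Om. \<forall>x\<in>D. \<omega> (fst x) (snd x) = d x}"
      using d unfolding g_def I_def by (auto simp: restrict_def PiE_def extensional_def fun_eq_iff split: prod.splits) (metis fst_conv snd_conv)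
    also have "\<dots> \<in> sets Om"
    proof -
      have "\<And>x. x \<in> D \<Longrightarrow> {\<omega> \<in> space Om. \<omega> (fst x) (snd x) = d x} \<in> sets Om"
      proof -
        fix x assume "x \<in> D"
        have "(\<lambda>\<omega>. \<omega> (fst x) (snd x)) -` {d x} \<inter> space Om \<in> sets Om"
          using meas_coord[of "fst x" "snd x"] by (rule measurable_sets) simp
        moreover have "(\<lambda>\<omega>. \<omega> (fst x) (snd x)) -` {d x} \<inter> space Om = {\<omega> \<in> space Om. \<omega> (fst x) (snd x) = d x}"
          by auto
        ultimately show "{\<omega> \<in> space Om. \<omega> (fst x) (snd x) = d x} \<in> sets Om" by simp
      qed
      then have "(\<Inter>x\<in>D. {\<omega> \<in> space Om. \<omega> (fst x) (snd x) = d x}) \<inter> space Om \<in> sets Om"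
        by (cases "D = {}") (auto intro!: sets.Int sets.finite_INT finD)
      moreover have "(\<Inter>x\<in>D. {\<omega> \<in> space Om. \<omega> (fst x) (snd x) = d x}) \<inter> space Om
          = {\<omega> \<in> space Om. \<forall>x\<in>D. \<omega> (fst x) (snd x) = d x}" by auto
      ultimately show ?thesis by simp
    qed
    finally show "g -` {d} \<inter> space Om \<in> sets Om" .
  qed
  have eq: "runM M s \<omega> n = runM M s (\<lambda>k S. g \<omega> (k, S)) n" for \<omega>
    using assms by (intro runM_cong) (auto simp: g_def D_def)
  have "(\<lambda>\<omega>. (\<lambda>d. \<lambda>_. runM M s (\<lambda>k S. d (k, S)) n) (g \<omega>) \<omega>) \<in> measurable Om (count_space UNIV)"
    by (rule measurable_compose_countable'[OF _ gm cI]) simp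
  then show ?thesis using eq by simp
qed

lemma meas_run_comp:
  assumes "Inv s" "h \<in> UNIV \<rightarrow> space N"
  shows "(\<lambda>\<omega>. h (runM M s \<omega> n)) \<in> measurable Om N"
  using measurable_comp[OF meas_run[OF assms(1)] , of h N] assms(2) by (simp add: comp_def)

end

context np begin


definition Ex :: "nat \<Rightarrow> (np_state \<Rightarrow> ennreal) \<Rightarrow> np_state \<Rightarrow> ennreal" where
  "Ex n g s = (\<integral>\<^sup>+\<omega>. g (runM M s \<omega> n) \<partial>Om)"

lemma SS: "sequence_space (measure_pmf CF)"
  unfolding sequence_space_def product_prob_space_def product_prob_space_axioms_def
    product_sigma_finite_def
  by (auto intro: prob_space_imp_sigma_finite prob_space_measure_pmf)

lemma Ex_0: "Ex 0 g s = g s"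
proof -
  interpret P: prob_space Om by (rule prob_Om)
  show ?thesis unfolding Ex_def by (simp add: P.emeasure_space_1)
qed

lemma Ex_Suc:
  assumes "Inv s"
  shows "Ex (Suc n) g s = (\<integral>\<^sup>+c. Ex n g (np_step M c s) \<partial>CF)"
proof -
  interpret SS: sequence_space "measure_pmf CF" by (rule SS)
  have OmS: "Om = SS.S" by (simp add: Omega_def)
  define G where "G \<omega> = g (runM M s \<omega> (Suc n))" for \<omega>
  have Gm: "G \<in> borel_measurable Om" unfolding G_def
    by (rule meas_run_comp[OF assms]) simp
  have cm: "(\<lambda>(c, \<omega>). case_nat c \<omega>) \<in> measurable (measure_pmf CF \<Otimes>\<^sub>M SS.S) SS.S"
    by measurable
  have "Ex (Suc n) g s = (\<integral>\<^sup>+\<omega>. G \<omega> \<partial>SS.S)" unfolding Ex_def G_def OmS ..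
  also have "\<dots> = (\<integral>\<^sup>+\<omega>. G \<omega> \<partial>distr (measure_pmf CF \<Otimes>\<^sub>M SS.S) SS.S (\<lambda>(c, \<omega>). case_nat c \<omega>))"
    by (simp add: SS.PiM_iter)
  also have "\<dots> = (\<integral>\<^sup>+x. G (case_prod case_nat x) \<partial>(measure_pmf CF \<Otimes>\<^sub>M SS.S))"
    using Gm OmS cm by (subst nn_integral_distr) auto
  also have "\<dots> = (\<integral>\<^sup>+c. \<integral>\<^sup>+\<omega>. G (case_nat c \<omega>) \<partial>SS.S \<partial>measure_pmf CF)"
  proof -
    have "(\<lambda>x. G (case_prod case_nat x)) \<in> borel_measurable (measure_pmf CF \<Otimes>\<^sub>M SS.S)"
      using measurable_compose[OF cm, of G borel] Gm OmS by (simp add: case_prod_unfold)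
    then show ?thesis by (subst SS.nn_integral_fst[symmetric]) (auto simp: case_prod_unfold)
  qed
  also have "\<dots> = (\<integral>\<^sup>+c. Ex n g (np_step M c s) \<partial>CF)"
    unfolding Ex_def G_def OmS
    by (intro nn_integral_cong) simp
  finally show ?thesis .
qed


lemma Inv_run: "Inv s \<Longrightarrow> Inv (runM M s \<omega> n)"
proof (induction n arbitrary: s \<omega>)
  case 0 then show ?case by simp
next
  case (Suc n) then show ?case using Suc.IH[OF Inv_step[OF Suc.prems]] by simp
qed

lemma choice_map: "S \<in> setsK K \<Longrightarrow> map_pmf (\<lambda>c. c S) CF = choice_pmf K f S"
  unfolding choice_fun_pmf_def by (subst Pi_pmf_component) (auto simp: setsK_def)

lemma pmf_choice:
  assumes "S \<in> setsK K"
  shows "pmf (choice_pmf K f S) x = (if x \<in> S then f x S else 0)"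
proof -
  have fin: "finite S" using assms unfolding setsK_def by (auto intro: finite_subset)
  have nn: "\<And>x. 0 \<le> (if x \<in> S then f x S else 0)" using pref_S(2)[OF assms] by (auto intro: less_imp_le)
  have "(\<integral>\<^sup>+x. ennreal (if x \<in> S then f x S else 0) \<partial>count_space UNIV)
      = (\<integral>\<^sup>+x. ennreal (f x S) * indicator S x \<partial>count_space UNIV)"
    by (intro nn_integral_cong) (auto split: split_indicator)
  also have "\<dots> = (\<Sum>x\<in>S. ennreal (f x S) * emeasure (count_space UNIV) {x})"
    using fin by (rule nn_integral_indicator_finite) simp
  also have "\<dots> = (\<Sum>x\<in>S. ennreal (f x S))" by simp
  also have "\<dots> = ennreal (\<Sum>x\<in>S. f x S)"
    using pref_S(2)[OF assms] by (intro sum_ennreal) (auto intro: less_imp_le)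
  also have "\<dots> = 1" using pref_S(1)[OF assms] by simp
  finally have "(\<integral>\<^sup>+x. ennreal (if x \<in> S then f x S else 0) \<partial>count_space UNIV) = 1" .
  then show ?thesis using assms unfolding choice_pmf_def
    by (simp add: pmf_embed_pmf[OF nn])
qed

lemma head_int:
  assumes "Inv (W, S # st, out)"
  shows "(\<integral>\<^sup>+c. h (np_step M c (W, S # st, out)) \<partial>CF)
       = (\<Sum>x\<in>S. h (np_step M (\<lambda>_. x) (W, S # st, out)) * ennreal (f x S))"
proof -
  note H = Inv_head[OF assms]
  have "(\<integral>\<^sup>+c. h (np_step M c (W, S # st, out)) \<partial>CF)
      = (\<integral>\<^sup>+c. h (np_step M (\<lambda>_. c S) (W, S # st, out)) \<partial>CF)"
    by (intro nn_integral_cong arg_cong[where f=h] np_step_head)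
  also have "\<dots> = (\<integral>\<^sup>+x. h (np_step M (\<lambda>_. x) (W, S # st, out)) \<partial>map_pmf (\<lambda>c. c S) CF)"
    by (simp only: nn_integral_map_pmf)
  also have "\<dots> = (\<integral>\<^sup>+x. h (np_step M (\<lambda>_. x) (W, S # st, out)) \<partial>choice_pmf K f S)"
    using choice_map[OF H(4)] by (simp only:)
  also have "\<dots> = (\<Sum>x\<in>S. h (np_step M (\<lambda>_. x) (W, S # st, out)) * pmf (choice_pmf K f S) x)"
    using H(2) by (intro nn_integral_measure_pmf_support)
      (auto simp: set_pmf_eq pmf_choice[OF H(4)])
  also have "\<dots> = (\<Sum>x\<in>S. h (np_step M (\<lambda>_. x) (W, S # st, out)) * ennreal (f x S))"
    by (intro sum.cong refl) (simp add: pmf_choice[OF H(4)])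
  finally show ?thesis .
qed

lemma nil_int: "(\<integral>\<^sup>+c. h (np_step M c (W, [], out)) \<partial>CF) = h (W, [], out)"
  by (simp add: measure_pmf.emeasure_space_1)

lemma Ex_meas: "Inv s \<Longrightarrow> (\<lambda>\<omega>. g (runM M s \<omega> n)) \<in> borel_measurable Om"
  by (rule meas_run_comp) simp_all

lemma Ex_comp:
  assumes "Inv s"
  shows "Ex (a + b) g s = Ex a (Ex b g) s"
  using assms
proof (induction a arbitrary: s)
  case 0 then show ?case by (simp add: Ex_0)
next
  case (Suc a)
  have "Ex (Suc a + b) g s = (\<integral>\<^sup>+c. Ex (a + b) g (np_step M c s) \<partial>CF)"
    using Ex_Suc[OF Suc.prems] by simp
  also have "\<dots> = (\<integral>\<^sup>+c. Ex a (Ex b g) (np_step M c s) \<partial>CF)"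
    by (intro nn_integral_cong Suc.IH Inv_step Suc.prems)
  also have "\<dots> = Ex (Suc a) (Ex b g) s" using Ex_Suc[OF Suc.prems] by simp
  finally show ?case .
qed

lemma Ex_mono:
  assumes "Inv s" "\<And>s'. Inv s' \<Longrightarrow> g1 s' \<le> g2 s'"
  shows "Ex n g1 s \<le> Ex n g2 s"
  unfolding Ex_def using assms Inv_run by (intro nn_integral_mono) auto

lemma Ex_cmult:
  assumes "Inv s"
  shows "Ex n (\<lambda>s'. c * g s') s = c * Ex n g s"
  unfolding Ex_def using Ex_meas[OF assms] by (rule nn_integral_cmult)

lemma Ex_add:
  assumes "Inv s"
  shows "Ex n (\<lambda>s'. g1 s' + g2 s') s = Ex n g1 s + Ex n g2 s"
  unfolding Ex_def using Ex_meas[OF assms] Ex_meas[OF assms] by (rule nn_integral_add)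

lemma Ex_const: "Ex n (\<lambda>_. c) s = c"
proof -
  interpret P: prob_space Om by (rule prob_Om)
  show ?thesis unfolding Ex_def by (simp add: P.emeasure_space_1)
qed

lemma Phi_super:
  assumes "Inv s"
  shows "Ex n (\<lambda>s'. ennreal (Phi s')) s \<le> ennreal (Phi s)"
  using assms
proof (induction n arbitrary: s)
  case 0 then show ?case by (simp add: Ex_0)
next
  case (Suc n)
  have "Ex (Suc n) (\<lambda>s'. ennreal (Phi s')) s = (\<integral>\<^sup>+c. Ex n (\<lambda>s'. ennreal (Phi s')) (np_step M c s) \<partial>CF)"
    by (rule Ex_Suc[OF Suc.prems])
  also have "\<dots> \<le> (\<integral>\<^sup>+c. ennreal (Phi (np_step M c s)) \<partial>CF)"
    by (intro nn_integral_mono Suc.IH Inv_step Suc.prems)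
  also have "\<dots> \<le> ennreal (Phi s)"
  proof (cases s)
    case (fields W st out)
    show ?thesis
    proof (cases st)
      case Nil then show ?thesis using fields by (simp add: nil_int)
    next
      case (Cons S st')
      have I: "Inv (W, S # st', out)" using Suc.prems fields Cons by simp
      have fnn: "\<forall>x\<in>S. f x S \<ge> 0" using pref_S(2)[OF Inv_head(4)[OF I]] by (auto intro: less_imp_le)
      have "(\<integral>\<^sup>+c. ennreal (Phi (np_step M c s)) \<partial>CF)
          = (\<Sum>x\<in>S. ennreal (Phi (np_step M (\<lambda>_. x) (W, S # st', out))) * ennreal (f x S))"
        unfolding fields Cons by (rule head_int[OF I])
      also have "\<dots> = ennreal (\<Sum>x\<in>S. f x S * Phi (np_step M (\<lambda>_. x) (W, S # st', out)))"
        using fnn Phi_nonneg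
        by (subst sum_ennreal[symmetric]) (auto simp: ennreal_mult'' mult.commute intro!: sum.cong)
      also have "\<dots> \<le> ennreal (Phi (W, S # st', out))"
        by (intro ennreal_leI Phi_step[OF I])
      finally show ?thesis using fields Cons by simp
    qed
  qed
  finally show ?case .
qed

end

context np begin

definition nb :: "np_state \<Rightarrow> nat" where "nb s = length (bl s)"

lemma nb_step:
  assumes I: "Inv (W, S # st, out)"
  shows "np_step M c (W, S # st, out) = (W(c S := Suc (W (c S))), S # st, out)
         \<and> \<not> (\<exists>y\<in>S. \<forall>z\<in>S - {y}. real ((W(c S := Suc (W (c S)))) z) + M \<le> real ((W(c S := Suc (W (c S)))) y))
       \<or> nb (np_step M c (W, S # st, out)) = Suc (nb (W, S # st, out))"
proof -
  note H = Inv_head[OF I]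
  show ?thesis
    using step_cases[where S=S and st=st and W'="W(c S := Suc (W (c S)))" and W=W and c=c and out=out,
          OF H(2) M0 H(3) H(5) refl]
    apply (rule disj_forward)
     apply (erule conjE, rule conjI, assumption, assumption)
    apply (elim exE conjE)
    apply (simp add: nb_def bl_def)
    done
qed

lemma nb_mono1: "Inv s \<Longrightarrow> nb s \<le> nb (np_step M c s)"
proof (cases s)
  case (fields W st out)
  assume I: "Inv s"
  show ?thesis
  proof (cases st)
    case Nil then show ?thesis using fields by simp
  next
    case (Cons S st')
    have I': "Inv (W, S # st', out)" using I fields Cons by simp
    from nb_step[OF I', of c] show ?thesis
    proof
      assume "np_step M c (W, S # st', out) = (W(c S := Suc (W (c S))), S # st', out)
         \<and> \<not> (\<exists>y\<in>S. \<forall>z\<in>S - {y}. real ((W(c S := Suc (W (c S)))) z) + M \<le> real ((W(c S := Suc (W (c S)))) y))"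
      then show ?thesis using fields Cons by (simp add: nb_def bl_def)
    next
      assume "nb (np_step M c (W, S # st', out)) = Suc (nb (W, S # st', out))"
      then show ?thesis using fields Cons by simp
    qed
  qed
qed

lemma nb_run_mono: "Inv s \<Longrightarrow> nb s \<le> nb (runM M s \<omega> n)"
proof (induction n arbitrary: s \<omega>)
  case 0 then show ?case by simp
next
  case (Suc n)
  have "nb s \<le> nb (np_step M (\<omega> 0) s)" by (rule nb_mono1[OF Suc.prems])
  also have "\<dots> \<le> nb (runM M (np_step M (\<omega> 0) s) (\<lambda>k. \<omega> (Suc k)) n)"
    by (rule Suc.IH[OF Inv_step[OF Suc.prems]])
  finally show ?case by simp
qed

lemma nb_bound:
  assumes I: "Inv s"
  shows "nb s \<le> K" "fst (snd s) \<noteq> [] \<Longrightarrow> nb s < K"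
proof -
  define X where "X = bl s"
  have dj: "disj X" and ne: "\<forall>B\<in>set X. B \<noteq> {}" and un: "\<Union>(set X) = {1..K}"
    using I unfolding Inv_def X_def by auto
  have pick: "\<And>u. u < length X \<Longrightarrow> \<exists>e. e \<in> X ! u" using ne by (metis all_not_in_conv nth_mem)
  have inj: "inj_on e {..<length X}" if e: "\<And>u. u < length X \<Longrightarrow> e u \<in> X ! u" for e
    by (rule inj_onI) (use e disj_unique[OF dj] in force)
  have img: "e ` {..<length X} \<subseteq> {1..K}" if e: "\<And>u. u < length X \<Longrightarrow> e u \<in> X ! u" for e
  proof
    fix x assume "x \<in> e ` {..<length X}"
    then obtain u where u: "u < length X" "x = e u" by auto
    then have "X ! u \<in> set X" by simp
    moreover have "x \<in> X ! u" using e u by simp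
    ultimately have "x \<in> \<Union>(set X)" by blast
    then show "x \<in> {1..K}" using un by simp
  qed
  define e where "e u = (SOME x. x \<in> X ! u)" for u
  have eX: "\<And>u. u < length X \<Longrightarrow> e u \<in> X ! u" unfolding e_def using pick by (metis someI_ex)
  have "card (e ` {..<length X}) = length X" using card_image[OF inj[OF eX]] by simp
  moreover have "card (e ` {..<length X}) \<le> K" using card_mono[OF _ img[OF eX]] by simp
  ultimately show "nb s \<le> K" by (simp add: nb_def X_def)
  assume nt: "fst (snd s) \<noteq> []"
  obtain W S st out where s: "s = (W, S # st, out)" using nt by (cases s) (auto simp: neq_Nil_conv)
  note H = Inv_head[OF I[unfolded s]]
  define h where "h = length out"
  have hX: "h < length X" "X ! h = S" using H(6,7) by (auto simp: X_def s h_def)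
  have "S \<noteq> {}" using H(3) by auto
  then obtain y1 where y1: "y1 \<in> S" by blast
  have "card (S - {y1}) \<ge> 1" using H(2,3) y1 by (simp add: card_Diff_singleton)
  then have "S - {y1} \<noteq> {}" by (metis card.empty not_one_le_zero)
  then obtain y2 where "y2 \<in> S - {y1}" by blast
  then have y: "y1 \<in> S" "y2 \<in> S" "y1 \<noteq> y2" using y1 by auto
  define e' where "e' u = (if u = h then y1 else e u)" for u
  have e'X: "\<And>u. u < length X \<Longrightarrow> e' u \<in> X ! u" unfolding e'_def using eX hX y by auto
  have "y2 \<notin> e' ` {..<length X}"
  proof
    assume "y2 \<in> e' ` {..<length X}"
    then obtain u where u: "u < length X" "y2 = e' u" by auto
    then have "y2 \<in> X ! u" using e'X by simp
    then have "u = h" using disj_unique[OF dj u(1) hX(1)] hX(2) y(2) by simp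
    then show False using u y e'_def by simp
  qed
  then have "e' ` {..<length X} \<subseteq> {1..K} - {y2}" using img[OF e'X] by auto
  moreover have "y2 \<in> {1..K}" using H(1) y by auto
  ultimately have "card (e' ` {..<length X}) \<le> K - 1" using card_mono[of "{1..K} - {y2}"] by fastforce
  moreover have "card (e' ` {..<length X}) = length X" using card_image[OF inj[OF e'X]] by simp
  moreover have "K \<ge> 1" using K2 by simp
  ultimately show "nb s < K" by (simp add: nb_def X_def)
qed

definition delta :: real where
  "delta = Min ((\<lambda>(S, i). f i S) ` (SIGMA S:setsK K. S))"

lemma finite_setsK: "finite (setsK K)"
  unfolding setsK_def by (rule finite_subset[of _ "Pow {1..K}"]) auto

lemma delta_props: "delta > 0" "\<And>S i. S \<in> setsK K \<Longrightarrow> i \<in> S \<Longrightarrow> delta \<le> f i S" "delta \<le> 1"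
proof -
  have fin: "finite (SIGMA S:setsK K. S)"
    using finite_setsK by (rule finite_SigmaI) (auto simp: setsK_def intro: finite_subset)
  have inK: "{1..K} \<in> setsK K" using K2 by (simp add: setsK_def)
  have "({1..K}, 1) \<in> (SIGMA S:setsK K. S)" using inK K2 by auto
  then have ne: "(SIGMA S:setsK K. S) \<noteq> {}" by blast
  show "delta > 0" unfolding delta_def using fin ne
    by (subst Min_gr_iff) (auto intro: pref_S(2))
  show "\<And>S i. S \<in> setsK K \<Longrightarrow> i \<in> S \<Longrightarrow> delta \<le> f i S" unfolding delta_def using fin
    by (intro Min_le) force+
  have "f 1 {1..K} \<le> (\<Sum>i\<in>{1..K}. f i {1..K})"
    using pref_S(2)[OF inK] K2 by (intro member_le_sum) (auto intro: less_imp_le)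
  then have "f 1 {1..K} \<le> 1" using pref_S(1)[OF inK] by simp
  moreover have "delta \<le> f 1 {1..K}" unfolding delta_def using fin inK K2
    by (intro Min_le) force+
  ultimately show "delta \<le> 1" by simp
qed

end

lemma ennreal_sub_le:
  fixes a :: ennreal
  assumes "a + ennreal x \<le> ennreal y" "0 \<le> x"
  shows "a \<le> ennreal (y - x)"
proof (cases a)
  case (real r)
  then have "ennreal (r + x) \<le> ennreal y" using assms by (simp add: ennreal_plus)
  then have "r + x \<le> y \<or> r + x \<le> 0"
    by (metis ennreal_le_iff2 le_cases)
  then show ?thesis
  proof
    assume "r + x \<le> y" then show ?thesis using real by (auto intro!: ennreal_leI)
  next
    assume "r + x \<le> 0" then have "r = 0" using real assms(2) by simp
    then show ?thesis using real by simp
  qed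
next
  case top
  then show ?thesis using assms by (simp add: top_unique)
qed

lemma runM_nil: "runM M (W, [], out) \<omega> n = (W, [], out)"
  by (induction n arbitrary: \<omega>) simp_all

context np begin

definition ind :: "nat \<Rightarrow> np_state \<Rightarrow> ennreal" where
  "ind N s = (if N < nb s then 1 else 0)"

lemma Ex_mono':
  assumes "\<And>\<omega>. g1 (runM M s \<omega> n) \<le> g2 (runM M s \<omega> n)"
  shows "Ex n g1 s \<le> Ex n g2 s"
  unfolding Ex_def using assms by (intro nn_integral_mono) auto

lemma Ex_after_drop:
  assumes "Inv s'" "N < nb s'"
  shows "Ex n (ind N) s' = 1"
proof -
  have "Ex n (ind N) s' = Ex n (\<lambda>_. 1) s'"
    unfolding Ex_def using nb_run_mono[OF assms(1)] assms(2)
    by (intro nn_integral_cong) (auto simp: ind_def intro: less_le_trans)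
  then show ?thesis by (simp add: Ex_const)
qed

lemma Ex_ge_head:
  assumes I: "Inv (W, S # st, out)" and y: "y \<in> S"
  shows "Ex n g (np_step M (\<lambda>_. y) (W, S # st, out)) * ennreal (f y S) \<le> Ex (Suc n) g (W, S # st, out)"
proof -
  have "Ex (Suc n) g (W, S # st, out) = (\<integral>\<^sup>+c. Ex n g (np_step M c (W, S # st, out)) \<partial>CF)"
    by (rule Ex_Suc[OF I])
  also have "\<dots> = (\<Sum>x\<in>S. Ex n g (np_step M (\<lambda>_. x) (W, S # st, out)) * ennreal (f x S))"
    by (rule head_int[OF I])
  finally show ?thesis using y Inv_head(2)[OF I]
    by (metis (no_types, lifting) member_le_sum zero_le)
qed

lemma drop:
  assumes I: "Inv (W, S # st, out)" and y: "y \<in> S"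
    and cond: "\<forall>z\<in>S - {y}. W z + m \<le> W y + Suc n"
  shows "ennreal (delta ^ Suc n) \<le> Ex (Suc n) (ind (nb (W, S # st, out))) (W, S # st, out)"
  using I cond
proof (induction n arbitrary: W)
  case (0 W)
  define s where "s = (W, S # st, out)"
  define N where "N = nb s"
  have key: "ennreal (delta ^ 0) \<le> Ex 0 (ind N) (np_step M (\<lambda>_. y) s)"
    using nb_step[OF "0.prems"(1), of "\<lambda>_. y"]
  proof
    assume h: "np_step M (\<lambda>_. y) (W, S # st, out) = (W(y := Suc (W y)), S # st, out) \<and>
        \<not> (\<exists>y'\<in>S. \<forall>z\<in>S - {y'}. real ((W(y := Suc (W y))) z) + M \<le> real ((W(y := Suc (W y))) y'))"
    have "\<forall>z\<in>S - {y}. real ((W(y := Suc (W y))) z) + M \<le> real ((W(y := Suc (W y))) y)"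
    proof
      fix z assume z: "z \<in> S - {y}"
      then have "W z + m \<le> W y + 1" using "0.prems"(2) by simp
      then have "real (W z) + real m \<le> real (W y) + 1" by linarith
      then show "real ((W(y := Suc (W y))) z) + M \<le> real ((W(y := Suc (W y))) y)"
        using z m_ge(1) by simp
    qed
    with h y show ?thesis by blast
  next
    assume asm: "nb (np_step M (\<lambda>_. y) (W, S # st, out)) = Suc (nb (W, S # st, out))"
    have "N < nb (np_step M (\<lambda>_. y) s)" unfolding N_def s_def by (simp only: asm lessI)
    then have "Ex 0 (ind N) (np_step M (\<lambda>_. y) s) = 1"
      using Ex_after_drop[OF Inv_step[OF "0.prems"(1), of "\<lambda>_. y"], where N=N and n=0]
      unfolding s_def by blast
    then show ?thesis by simp
  qed
  have "ennreal (delta ^ Suc 0) \<le> ennreal (delta ^ 0) * ennreal (f y S)"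
    using delta_props(2)[OF Inv_head(4)[OF "0.prems"(1)] y] delta_props(1)
    by (simp add: ennreal_leI)
  also have "\<dots> \<le> Ex 0 (ind N) (np_step M (\<lambda>_. y) s) * ennreal (f y S)"
    by (intro mult_right_mono key) simp
  also have "\<dots> \<le> Ex (Suc 0) (ind N) s"
    unfolding s_def by (rule Ex_ge_head[OF "0.prems"(1) y])
  finally show ?case by (simp add: s_def N_def)
next
  case (Suc n W)
  define s where "s = (W, S # st, out)"
  define N where "N = nb s"
  have dpos: "delta \<ge> 0" using delta_props(1) by simp
  have key: "ennreal (delta ^ Suc n) \<le> Ex (Suc n) (ind N) (np_step M (\<lambda>_. y) s)"
    using nb_step[OF "Suc.prems"(1), of "\<lambda>_. y"]
  proof
    assume h: "np_step M (\<lambda>_. y) (W, S # st, out) = (W(y := Suc (W y)), S # st, out) \<and>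
        \<not> (\<exists>y'\<in>S. \<forall>z\<in>S - {y'}. real ((W(y := Suc (W y))) z) + M \<le> real ((W(y := Suc (W y))) y'))"
    define W' where "W' = W(y := Suc (W y))"
    have I': "Inv (W', S # st, out)"
      using Inv_step[OF "Suc.prems"(1), of "\<lambda>_. y"] h unfolding W'_def by simp
    have c': "\<forall>z\<in>S - {y}. W' z + m \<le> W' y + Suc n"
      using "Suc.prems"(2) unfolding W'_def by auto
    have nbN: "nb (W', S # st, out) = N" by (simp add: N_def s_def nb_def bl_def)
    have e1: "np_step M (\<lambda>_. y) s = (W', S # st, out)" unfolding s_def W'_def using h by (rule conjunct1)
    show ?thesis unfolding e1 using Suc.IH[OF I' c'] unfolding nbN .
  next
    assume asm: "nb (np_step M (\<lambda>_. y) (W, S # st, out)) = Suc (nb (W, S # st, out))"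
    have "N < nb (np_step M (\<lambda>_. y) s)" unfolding N_def s_def by (simp only: asm lessI)
    then have "Ex (Suc n) (ind N) (np_step M (\<lambda>_. y) s) = 1"
      using Ex_after_drop[OF Inv_step[OF "Suc.prems"(1), of "\<lambda>_. y"], where N=N and n="Suc n"]
      unfolding s_def by blast
    moreover have "delta ^ Suc n \<le> 1" using dpos delta_props(3) by (intro power_le_one)
    ultimately show ?thesis by simp
  qed
  have "ennreal (delta ^ Suc (Suc n)) \<le> ennreal (delta ^ Suc n) * ennreal (f y S)"
  proof -
    have "delta ^ Suc (Suc n) \<le> delta ^ Suc n * f y S"
      using delta_props(2)[OF Inv_head(4)[OF "Suc.prems"(1)] y] dpos
      by (simp add: mult.commute mult_right_mono)
    then have "ennreal (delta ^ Suc (Suc n)) \<le> ennreal (delta ^ Suc n * f y S)" by (rule ennreal_leI)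
    also have "\<dots> = ennreal (delta ^ Suc n) * ennreal (f y S)"
      using dpos delta_props(2)[OF Inv_head(4)[OF "Suc.prems"(1)] y] by (intro ennreal_mult) auto
    finally show ?thesis .
  qed
  also have "\<dots> \<le> Ex (Suc n) (ind N) (np_step M (\<lambda>_. y) s) * ennreal (f y S)"
    by (intro mult_right_mono key) simp
  also have "\<dots> \<le> Ex (Suc (Suc n)) (ind N) s"
    unfolding s_def by (rule Ex_ge_head[OF "Suc.prems"(1) y])
  finally show ?case by (simp add: s_def N_def)
qed

end

context np begin

definition psi :: "np_state \<Rightarrow> ennreal" where
  "psi s = ennreal (if fst (snd s) = [] then 0 else 2 ^ (K - nb s))"

definition lam :: real where "lam = 1 - delta ^ m / 2"

lemma lam_props: "0 \<le> lam" "lam < 1"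
proof -
  have "0 < delta ^ m" "delta ^ m \<le> 1" using delta_props(1,3) by (auto intro: power_le_one)
  then show "0 \<le> lam" "lam < 1" unfolding lam_def by auto
qed

lemma psi_contr:
  assumes I: "Inv s"
  shows "Ex m psi s \<le> ennreal lam * psi s"
proof (cases s)
  case (fields W st out)
  show ?thesis
  proof (cases st)
    case Nil
    have "Ex m psi s = psi s" unfolding Ex_def fields Nil runM_nil
      using Ex_const[of m "psi (W, [], out)"] by (simp add: Ex_def)
    then show ?thesis using fields Nil by (simp add: psi_def)
  next
    case (Cons S st')
    have s: "s = (W, S # st', out)" using fields Cons by simp
    have I': "Inv (W, S # st', out)" using I s by simp
    note H = Inv_head[OF I']
    define N where "N = nb s"
    define r where "r = K - N"
    have NK: "N < K" using nb_bound(2)[OF I] s by (simp add: N_def)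
    then have r1: "r \<ge> 1" by (simp add: r_def)
    have psis: "psi s = ennreal (2 ^ r)" using s by (simp add: psi_def r_def N_def)
    obtain y where y: "y \<in> S" "\<forall>z\<in>S. W z \<le> W y"
    proof -
      have "S \<noteq> {}" using H(3) by auto
      then have "Max (W ` S) \<in> W ` S" using H(2) by (intro Max_in) auto
      then obtain y where "y \<in> S" "W y = Max (W ` S)" by auto
      moreover have "\<forall>z\<in>S. W z \<le> Max (W ` S)" using H(2) by auto
      ultimately show ?thesis using that by auto
    qed
    have m1: "Suc (m - 1) = m" using m_ge(3) by simp
    have dropm: "ennreal (delta ^ m) \<le> Ex m (ind N) s"
      using drop[OF I' y(1), of "m - 1"] y(2) m1 unfolding N_def s by auto
    define c where "c = (2::real) ^ r / 2"
    have c0: "c \<ge> 0" by (simp add: c_def)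
    have pw: "psi s' + ennreal c * ind N s' \<le> ennreal (2 ^ r)" if "Inv s'" "N \<le> nb s'" for s'
    proof -
      have nbK: "nb s' \<le> K" using nb_bound(1)[OF that(1)] .
      show ?thesis
      proof (cases "N < nb s'")
        case True
        have "K - nb s' \<le> r - 1" using True nbK by (simp add: r_def)
        then have "(2::real) ^ (K - nb s') \<le> 2 ^ (r - 1)" by (intro power_increasing) auto
        also have "\<dots> = c" unfolding c_def using r1 by (cases r) auto
        finally have "psi s' \<le> ennreal c" unfolding psi_def using c0 by (auto intro: ennreal_leI)
        then have "psi s' + ennreal c * ind N s' \<le> ennreal c + ennreal c"
          using True by (simp add: ind_def add_right_mono)
        also have "\<dots> = ennreal (2 ^ r)" using c0 unfolding c_def by (simp flip: ennreal_plus)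
        finally show ?thesis .
      next
        case False
        then have "nb s' = N" using that by simp
        then have "psi s' \<le> ennreal (2 ^ r)" unfolding psi_def r_def by (auto intro: ennreal_leI)
        then show ?thesis using False by (simp add: ind_def)
      qed
    qed
    have "Ex m psi s + ennreal c * Ex m (ind N) s = Ex m (\<lambda>s'. psi s' + ennreal c * ind N s') s"
      by (simp add: Ex_add[OF I] Ex_cmult[OF I])
    also have "\<dots> \<le> Ex m (\<lambda>_. ennreal (2 ^ r)) s"
      by (rule Ex_mono') (use pw Inv_run[OF I] nb_run_mono[OF I] in \<open>auto simp: N_def\<close>)
    also have "\<dots> = ennreal (2 ^ r)" by (rule Ex_const)
    finally have "Ex m psi s + ennreal c * Ex m (ind N) s \<le> ennreal (2 ^ r)" .
    moreover have "ennreal c * ennreal (delta ^ m) \<le> ennreal c * Ex m (ind N) s"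
      by (intro mult_left_mono dropm) simp
    ultimately have "Ex m psi s + ennreal (c * delta ^ m) \<le> ennreal (2 ^ r)"
      using c0 delta_props(1)
      by (metis (no_types, lifting) add_left_mono ennreal_mult order_trans less_imp_le zero_le_power)
    then have "Ex m psi s \<le> ennreal (2 ^ r - c * delta ^ m)"
      by (rule ennreal_sub_le) (use c0 delta_props(1) in simp)
    also have "2 ^ r - c * delta ^ m = lam * 2 ^ r" unfolding lam_def c_def by (simp add: algebra_simps)
    also have "ennreal (lam * 2 ^ r) = ennreal lam * psi s" using psis lam_props(1)
      by (simp add: ennreal_mult)
    finally show ?thesis .
  qed
qed

lemma psi_iter:
  assumes "Inv s"
  shows "Ex (j * m) psi s \<le> ennreal (lam ^ j) * psi s"
  using assms
proof (induction j arbitrary: s)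
  case 0 then show ?case by (simp add: Ex_0)
next
  case (Suc j)
  have "Ex (Suc j * m) psi s = Ex m (Ex (j * m) psi) s" using Ex_comp[OF Suc.prems] by simp
  also have "\<dots> \<le> Ex m (\<lambda>s'. ennreal (lam ^ j) * psi s') s"
    by (rule Ex_mono[OF Suc.prems Suc.IH])
  also have "\<dots> = ennreal (lam ^ j) * Ex m psi s" by (rule Ex_cmult[OF Suc.prems])
  also have "\<dots> \<le> ennreal (lam ^ j) * (ennreal lam * psi s)"
    by (intro mult_left_mono psi_contr Suc.prems) simp
  also have "\<dots> = ennreal (lam ^ Suc j) * psi s"
    using ennreal_mult[OF lam_props(1) zero_le_power[OF lam_props(1), of j]] by (simp add: mult_ac)
  finally show ?case .
qed

end

context np begin

definition good :: "np_state \<Rightarrow> bool" where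
  "good s \<longleftrightarrow> fst (snd s) = [] \<and> length (snd (snd s)) = K \<and> (\<forall>k<K. \<sigma> (snd (snd s) ! k) = Suc k)"

lemma correct_iff: "np_correct K M \<sigma> \<omega> \<longleftrightarrow> (\<exists>t. good (runM M s0 \<omega> t))"
  unfolding np_correct_def good_def Let_def np_run_eq[of K M \<omega>] s0_eq by simp

lemma bad_le: "Inv s \<Longrightarrow> \<not> good s \<Longrightarrow> 1 \<le> ennreal (Phi s) + psi s"
proof -
  assume I: "Inv s" and ng: "\<not> good s"
  obtain W st out where s: "s = (W, st, out)" by (cases s)
  show ?thesis
  proof (cases st)
    case Nil
    have "\<not> (length out = K \<and> (\<forall>k<K. \<sigma> (out ! k) = Suc k))" using ng s Nil by (simp add: good_def)
    then have "1 \<le> Phi (W, [], out)" using Phi_terminal I s Nil by simp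
    then have "1 \<le> ennreal (Phi s)" using s Nil by (simp add: ennreal_leI)
    then show ?thesis by (rule order_trans) simp
  next
    case (Cons S st')
    have "psi s = ennreal (2 ^ (K - nb s))" using s Cons by (simp add: psi_def)
    moreover have "(1::real) \<le> 2 ^ (K - nb s)" by simp
    ultimately have "1 \<le> psi s" by (simp add: ennreal_leI)
    then show ?thesis by (rule order_trans) simp
  qed
qed

lemma Phi_s0_le: "Phi s0 \<le> real (K - 1) * p powr M"
proof -
  have "p ^ m = p powr real m" using p0 by (simp add: powr_realpow)
  also have "\<dots> \<le> p powr M" using m_ge(1) p0 p1 by (intro powr_mono') auto
  finally show ?thesis unfolding Phi_s0 by (intro mult_left_mono) auto
qed

lemma psi_s0: "psi s0 = ennreal (2 ^ (K - 1))"
  by (simp add: psi_def s0_def nb_def bl_def)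

lemma main_bound:
  "{\<omega> \<in> space Om. \<not> np_correct K M \<sigma> \<omega>} \<in> sets Om
   \<and> measure Om {\<omega> \<in> space Om. \<not> np_correct K M \<sigma> \<omega>} \<le> real (K - 1) * p powr M"
proof -
  interpret P: prob_space Om by (rule prob_Om)
  define B where "B t = {\<omega> \<in> space Om. \<not> good (runM M s0 \<omega> t)}" for t
  define N where "N = {\<omega> \<in> space Om. \<not> np_correct K M \<sigma> \<omega>}"
  have Bs: "B t \<in> sets Om" for t
  proof -
    have "(\<lambda>\<omega>. runM M s0 \<omega> t) -` {s. \<not> good s} \<inter> space Om \<in> sets Om"
      by (rule measurable_sets[OF meas_run[OF Inv_s0]]) simp
    moreover have "(\<lambda>\<omega>. runM M s0 \<omega> t) -` {s. \<not> good s} \<inter> space Om = B t"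
      unfolding B_def by auto
    ultimately show ?thesis by simp
  qed
  have NB: "N = (\<Inter>t\<in>UNIV. B t)" unfolding N_def B_def correct_iff by auto
  have Ns: "N \<in> sets Om" unfolding NB by (rule sets.countable_INT) (use Bs in auto)
  define C where "C = (2::real) ^ (K - 1)"
  have bnd: "measure Om N \<le> Phi s0 + lam ^ j * C" for j
  proof -
    define t where "t = j * m"
    have "emeasure Om N \<le> emeasure Om (B t)" unfolding NB by (intro emeasure_mono Bs) auto
    also have "\<dots> = (\<integral>\<^sup>+\<omega>. indicator (B t) \<omega> \<partial>Om)" using Bs by simp
    also have "\<dots> \<le> (\<integral>\<^sup>+\<omega>. ennreal (Phi (runM M s0 \<omega> t)) + psi (runM M s0 \<omega> t) \<partial>Om)"
    proof (intro nn_integral_mono)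
      fix \<omega> assume "\<omega> \<in> space Om"
      show "indicator (B t) \<omega> \<le> ennreal (Phi (runM M s0 \<omega> t)) + psi (runM M s0 \<omega> t)"
        using bad_le[OF Inv_run[OF Inv_s0]] unfolding B_def by (auto split: split_indicator)
    qed
    also have "\<dots> = Ex t (\<lambda>s. ennreal (Phi s)) s0 + Ex t psi s0"
      unfolding Ex_add[OF Inv_s0, symmetric] by (simp add: Ex_def)
    also have "\<dots> \<le> ennreal (Phi s0) + ennreal (lam ^ j) * psi s0"
      unfolding t_def by (intro add_mono Phi_super psi_iter Inv_s0)
    also have "\<dots> = ennreal (Phi s0 + lam ^ j * C)"
      unfolding psi_s0 C_def using Phi_nonneg lam_props(1)
      by (simp add: ennreal_plus ennreal_mult)
    finally have "ennreal (measure Om N) \<le> ennreal (Phi s0 + lam ^ j * C)"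
      by (simp add: P.emeasure_eq_measure)
    moreover have "0 \<le> Phi s0 + lam ^ j * C" using Phi_nonneg lam_props(1) by (simp add: C_def)
    ultimately show ?thesis by (simp add: ennreal_le_iff)
  qed
  have lim: "(\<lambda>j. Phi s0 + lam ^ j * C) \<longlonglongrightarrow> Phi s0 + 0 * C"
    using lam_props by (intro tendsto_intros LIMSEQ_power_zero) auto
  have "measure Om N \<le> Phi s0"
    using LIMSEQ_le_const[OF lim] bnd by auto
  also have "\<dots> \<le> real (K - 1) * p powr M" by (rule Phi_s0_le)
  finally show ?thesis using Ns unfolding N_def by simp
qed

end

theorem mainTheorem13:
  fixes K :: nat and p M :: real and f :: "nat \<Rightarrow> nat set \<Rightarrow> real" and \<sigma> :: "nat \<Rightarrow> nat"
  assumes "K \<ge> 2" and "0 < p" and "p < 1" and "M > 0"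
    and "is_pref K f" and "is_ranking K p f \<sigma>"
  shows "{\<omega> \<in> space (Omega K f). \<not> np_correct K M \<sigma> \<omega>} \<in> sets (Omega K f)
         \<and> measure (Omega K f) {\<omega> \<in> space (Omega K f). \<not> np_correct K M \<sigma> \<omega>}
             \<le> real (K - 1) * p powr M"
proof -
  interpret np K p M f \<sigma> using assms by unfold_locales
  show ?thesis by (rule main_bound)
qed


end
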